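(* Let $A=(A,d,\Delta)$ be a mixed complex. There is an inclusion $\mathsf{CC}^-(\mathrm{End}_A)\hookrightarrow\mathrm{End}_{\mathsf{CC}^-(A)}$ in $\mathcal Ops^{\mathsf{MxCpx}}$, given in arity $n$ by sending $f\otimes u^r$ to the $k[u]$-multilinear map $a_1u^{i_1}\otimes\cdots\otimes a_nu^{i_n}\mapsto f(a_1,\dots,a_n)u^{r+\sum_j i_j}$.
   Context: Cohomological grading, $|u|=2$. A mixed complex is $(V,d,\Delta)$ with $(V,d)$ a cochain complex and $\Delta$ of degree $-1$, $\Delta^2=0$, $d\Delta+\Delta d=0$. $\mathcal Ops^{\mathsf{MxCpx}}$ denotes operads in mixed complexes. For a mixed complex $A$, $\mathrm{End}_A$ denotes the endomorphism operad of $(A,d)$ regarded as an operad in mixed complexes with operator $\{\Delta,f\}=\Delta\circ_1f-(-1)^{|f|}\sum_i f\circ_i\Delta$. $\mathsf{CC}^-(A):=(A\otimes k[u],d+u\Delta)$, regarded as a mixed complex with the $u$-linear extension of $\Delta$, and $\mathrm{End}_{\mathsf{CC}^-(A)}$ is its endomorphism operad as an operad in mixed complexes in the same way. For an operad in mixed complexes $(\mathcal O,\partial,\Delta)$, $\mathsf{CC}^-(\mathcal O)(n)=(\mathcal O(n)\otimes k[u],\partial+\Delta u,\Delta)$ with compositions $(a u^r)\circ_i(bu^s)=(a\circ_ib)u^{r+s}$. *)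

theory Defs
  imports Complex_Main "HOL-Library.Function_Algebras" "HOL-Combinatorics.Permutations"
begin

section \<open>Graded vector spaces, modelled degreewise\<close>

text \<open>A cohomologically graded k-vector space is given by an ambient k-vector space
  (scalar multiplication sb) and a family Bc of subspaces, Bc e being the degree e
  component.  The graded space itself is the external direct sum of the Bc e;
  all structure maps take the degree of their argument explicitly.\<close>

definition sgnmul :: "int \<Rightarrow> 'b::ab_group_add \<Rightarrow> 'b" where
  "sgnmul k x = (if even k then x else - x)"

definition mixed_cx ::
  "('k::field \<Rightarrow> 'b::ab_group_add \<Rightarrow> 'b) \<Rightarrow> (int \<Rightarrow> 'b set)
     \<Rightarrow> (int \<Rightarrow> 'b \<Rightarrow> 'b) \<Rightarrow> (int \<Rightarrow> 'b \<Rightarrow> 'b) \<Rightarrow> bool" where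
  "mixed_cx sb Bc dB DB \<longleftrightarrow>
     vector_space sb \<and> (\<forall>e. module.subspace sb (Bc e)) \<and>
     (\<forall>e. \<forall>x\<in>Bc e. dB e x \<in> Bc (e + 1) \<and> DB e x \<in> Bc (e - 1) \<and>
        dB (e + 1) (dB e x) = 0 \<and> DB (e - 1) (DB e x) = 0 \<and>
        dB (e - 1) (DB e x) + DB (e + 1) (dB e x) = 0) \<and>
     (\<forall>e c. \<forall>x\<in>Bc e. \<forall>y\<in>Bc e.
        dB e (x + y) = dB e x + dB e y \<and> dB e (sb c x) = sb c (dB e x) \<and>
        DB e (x + y) = DB e x + DB e y \<and> DB e (sb c x) = sb c (DB e x))"

section \<open>Endomorphism operad\<close>

definition indom :: "(int \<Rightarrow> 'b set) \<Rightarrow> nat \<Rightarrow> int list \<Rightarrow> 'b list \<Rightarrow> bool" where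
  "indom Bc n es xs \<longleftrightarrow> length es = n \<and> length xs = n \<and> (\<forall>j<n. xs ! j \<in> Bc (es ! j))"

text \<open>EndS sb Bc n p: the degree p part of End(n) = Hom(B^{\<otimes> n}, B), i.e. families
  (indexed by the degrees es of the inputs) of k-multilinear maps
  B_{es_1} x ... x B_{es_n} \<rightarrow> B_{sum es + p}; extended by 0 off the domain.\<close>

definition EndS ::
  "('k::field \<Rightarrow> 'b::ab_group_add \<Rightarrow> 'b) \<Rightarrow> (int \<Rightarrow> 'b set) \<Rightarrow> nat \<Rightarrow> int
     \<Rightarrow> (int list \<Rightarrow> 'b list \<Rightarrow> 'b) set" where
  "EndS sb Bc n p = {F.
     (\<forall>es xs. indom Bc n es xs \<longrightarrow> F es xs \<in> Bc (sum_list es + p)) \<and>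
     (\<forall>es xs. \<not> indom Bc n es xs \<longrightarrow> F es xs = 0) \<and>
     (\<forall>es xs j x y c. indom Bc n es xs \<and> j < n \<and> x \<in> Bc (es ! j) \<and> y \<in> Bc (es ! j) \<longrightarrow>
        F es (xs[j := x + y]) = F es (xs[j := x]) + F es (xs[j := y]) \<and>
        F es (xs[j := sb c x]) = sb c (F es (xs[j := x])))}"

definition fscale ::
  "('k \<Rightarrow> 'b \<Rightarrow> 'b) \<Rightarrow> 'k \<Rightarrow> (int list \<Rightarrow> 'b list \<Rightarrow> 'b) \<Rightarrow> (int list \<Rightarrow> 'b list \<Rightarrow> 'b)" where
  "fscale sb c F = (\<lambda>es xs. sb c (F es xs))"

text \<open>Graded commutator [D, F] = D \<circ>_1 F - (-1)^{|F||D|} \<Sum>_j F \<circ>_j D for an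
  operator D of degree k, F of arity n and degree p (Koszul signs included).\<close>

definition ebracket ::
  "(int \<Rightarrow> 'b set) \<Rightarrow> (int \<Rightarrow> 'b \<Rightarrow> 'b::ab_group_add) \<Rightarrow> int \<Rightarrow> nat \<Rightarrow> int
     \<Rightarrow> (int list \<Rightarrow> 'b list \<Rightarrow> 'b) \<Rightarrow> (int list \<Rightarrow> 'b list \<Rightarrow> 'b)" where
  "ebracket Bc D k n p F = (\<lambda>es xs. if indom Bc n es xs then
      D (sum_list es + p) (F es xs)
      - sgnmul (p * k) (\<Sum>j<n. sgnmul (k * sum_list (take j es))
            (F (es[j := es ! j + k]) (xs[j := D (es ! j) (xs ! j)])))
     else 0)"

text \<open>Partial composition F \<circ>_j G (j is 0-based, j < n), F of arity n, G of arity m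
  and degree q.\<close>

definition compEnd ::
  "(int \<Rightarrow> 'b set) \<Rightarrow> nat \<Rightarrow> nat \<Rightarrow> int \<Rightarrow> nat
     \<Rightarrow> (int list \<Rightarrow> 'b list \<Rightarrow> 'b::ab_group_add) \<Rightarrow> (int list \<Rightarrow> 'b list \<Rightarrow> 'b)
     \<Rightarrow> (int list \<Rightarrow> 'b list \<Rightarrow> 'b)" where
  "compEnd Bc n m q j F G = (\<lambda>es xs. if indom Bc (n + m - 1) es xs then
      sgnmul (q * sum_list (take j es))
        (F (take j es @ [sum_list (take m (drop j es)) + q] @ drop (j + m) es)
           (take j xs @ [G (take m (drop j es)) (take m (drop j xs))] @ drop (j + m) xs))
     else 0)"

definition koszul :: "(nat \<Rightarrow> nat) \<Rightarrow> int list \<Rightarrow> nat \<Rightarrow> int" where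
  "koszul \<sigma> es n = (\<Sum>(i, j) \<in> {(i, j). i < j \<and> j < n \<and> \<sigma> j < \<sigma> i}. es ! \<sigma> i * es ! \<sigma> j)"

definition actEnd ::
  "(int \<Rightarrow> 'b set) \<Rightarrow> nat \<Rightarrow> (nat \<Rightarrow> nat) \<Rightarrow> (int list \<Rightarrow> 'b list \<Rightarrow> 'b::ab_group_add)
     \<Rightarrow> (int list \<Rightarrow> 'b list \<Rightarrow> 'b)" where
  "actEnd Bc n \<sigma> F = (\<lambda>es xs. if indom Bc n es xs then
      sgnmul (koszul \<sigma> es n) (F (map (\<lambda>i. es ! \<sigma> i) [0..<n]) (map (\<lambda>i. xs ! \<sigma> i) [0..<n]))
     else 0)"

definition unitEnd :: "(int \<Rightarrow> 'b set) \<Rightarrow> (int list \<Rightarrow> 'b list \<Rightarrow> 'b::ab_group_add)" where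
  "unitEnd Bc = (\<lambda>es xs. if indom Bc 1 es xs then xs ! 0 else 0)"

section \<open>Negative cyclic complex CC^-(A) = (A \<otimes> k[u], d + u\<Delta>), |u| = 2\<close>

text \<open>An element of degree e is c :: nat \<Rightarrow> 'a of finite support, standing for
  \<Sum>_i c(i) u^i with c(i) \<in> A_{e - 2i}.\<close>

definition CCc :: "(int \<Rightarrow> 'a::zero set) \<Rightarrow> int \<Rightarrow> (nat \<Rightarrow> 'a) set" where
  "CCc Ac e = {c. finite {i. c i \<noteq> 0} \<and> (\<forall>i. c i \<in> Ac (e - 2 * int i))}"

definition scc :: "('k \<Rightarrow> 'a \<Rightarrow> 'a) \<Rightarrow> 'k \<Rightarrow> (nat \<Rightarrow> 'a) \<Rightarrow> (nat \<Rightarrow> 'a)" where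
  "scc sc c x = (\<lambda>i. sc c (x i))"

definition dCC :: "(int \<Rightarrow> 'a \<Rightarrow> 'a) \<Rightarrow> (int \<Rightarrow> 'a \<Rightarrow> 'a) \<Rightarrow> int \<Rightarrow> (nat \<Rightarrow> 'a::ab_group_add)
     \<Rightarrow> (nat \<Rightarrow> 'a)" where
  "dCC d Dl e c = (\<lambda>i. d (e - 2 * int i) (c i)
      + (if i = 0 then 0 else Dl (e - 2 * int i + 2) (c (i - 1))))"

definition DCC :: "(int \<Rightarrow> 'a \<Rightarrow> 'a) \<Rightarrow> int \<Rightarrow> (nat \<Rightarrow> 'a) \<Rightarrow> (nat \<Rightarrow> 'a)" where
  "DCC Dl e c = (\<lambda>i. Dl (e - 2 * int i) (c i))"

section \<open>CC^-(End_A) = (End_A \<otimes> k[u], \<partial> + \<Delta>u, \<Delta>)\<close>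

text \<open>Degree q part of CC^-(End_A)(n): finitely supported \<phi> :: nat \<Rightarrow> End with
  \<phi> r \<in> End_A(n)^{q - 2r}, standing for \<Sum>_r \<phi>(r) u^r.\<close>

definition CCE ::
  "('k::field \<Rightarrow> 'a::ab_group_add \<Rightarrow> 'a) \<Rightarrow> (int \<Rightarrow> 'a set) \<Rightarrow> nat \<Rightarrow> int
     \<Rightarrow> (nat \<Rightarrow> int list \<Rightarrow> 'a list \<Rightarrow> 'a) set" where
  "CCE sc Ac n q = {\<phi>. finite {r. \<phi> r \<noteq> 0} \<and> (\<forall>r. \<phi> r \<in> EndS sc Ac n (q - 2 * int r))}"

definition dCCE ::
  "(int \<Rightarrow> 'a set) \<Rightarrow> (int \<Rightarrow> 'a \<Rightarrow> 'a::ab_group_add) \<Rightarrow> (int \<Rightarrow> 'a \<Rightarrow> 'a) \<Rightarrow> nat \<Rightarrow> int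
     \<Rightarrow> (nat \<Rightarrow> int list \<Rightarrow> 'a list \<Rightarrow> 'a) \<Rightarrow> (nat \<Rightarrow> int list \<Rightarrow> 'a list \<Rightarrow> 'a)" where
  "dCCE Ac d Dl n q \<phi> = (\<lambda>r. ebracket Ac d 1 n (q - 2 * int r) (\<phi> r)
      + (if r = 0 then 0 else ebracket Ac Dl (-1) n (q - 2 * int r + 2) (\<phi> (r - 1))))"

definition DCCE ::
  "(int \<Rightarrow> 'a set) \<Rightarrow> (int \<Rightarrow> 'a \<Rightarrow> 'a::ab_group_add) \<Rightarrow> nat \<Rightarrow> int
     \<Rightarrow> (nat \<Rightarrow> int list \<Rightarrow> 'a list \<Rightarrow> 'a) \<Rightarrow> (nat \<Rightarrow> int list \<Rightarrow> 'a list \<Rightarrow> 'a)" where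
  "DCCE Ac Dl n q \<phi> = (\<lambda>r. ebracket Ac Dl (-1) n (q - 2 * int r) (\<phi> r))"

text \<open>(a u^r) \<circ>_j (b u^s) = (a \<circ>_j b) u^{r+s}; \<psi> has total degree q'.\<close>

definition compCCE ::
  "(int \<Rightarrow> 'a set) \<Rightarrow> nat \<Rightarrow> nat \<Rightarrow> int \<Rightarrow> nat
     \<Rightarrow> (nat \<Rightarrow> int list \<Rightarrow> 'a list \<Rightarrow> 'a::ab_group_add) \<Rightarrow> (nat \<Rightarrow> int list \<Rightarrow> 'a list \<Rightarrow> 'a)
     \<Rightarrow> (nat \<Rightarrow> int list \<Rightarrow> 'a list \<Rightarrow> 'a)" where
  "compCCE Ac n m q' j \<phi> \<psi> = (\<lambda>r. \<Sum>s\<le>r.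
      compEnd Ac n m (q' - 2 * int (r - s)) j (\<phi> s) (\<psi> (r - s)))"

definition actCCE ::
  "(int \<Rightarrow> 'a set) \<Rightarrow> nat \<Rightarrow> (nat \<Rightarrow> nat) \<Rightarrow> (nat \<Rightarrow> int list \<Rightarrow> 'a list \<Rightarrow> 'a::ab_group_add)
     \<Rightarrow> (nat \<Rightarrow> int list \<Rightarrow> 'a list \<Rightarrow> 'a)" where
  "actCCE Ac n \<sigma> \<phi> = (\<lambda>r. actEnd Ac n \<sigma> (\<phi> r))"

definition unitCCE :: "(int \<Rightarrow> 'a set) \<Rightarrow> (nat \<Rightarrow> int list \<Rightarrow> 'a list \<Rightarrow> 'a::ab_group_add)" where
  "unitCCE Ac = (\<lambda>r. if r = 0 then unitEnd Ac else 0)"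

text \<open>Phi Ac n q \<phi>: the k[u]-multilinear map sending
  a_1 u^{i_1} \<otimes> ... \<otimes> a_n u^{i_n} to \<Sum>_r \<phi>(r)(a_1,...,a_n) u^{r + \<Sum> i_j}.\<close>

definition Phi ::
  "(int \<Rightarrow> 'a set) \<Rightarrow> nat \<Rightarrow> int \<Rightarrow> (nat \<Rightarrow> int list \<Rightarrow> 'a list \<Rightarrow> 'a::ab_group_add)
     \<Rightarrow> (int list \<Rightarrow> (nat \<Rightarrow> 'a) list \<Rightarrow> (nat \<Rightarrow> 'a))" where
  "Phi Ac n q \<phi> = (\<lambda>es cs. if indom (CCc Ac) n es cs then
      (\<lambda>N. \<Sum>(r, is) \<in> {(r, is). r \<le> N \<and> length is = n \<and> set is \<subseteq> {..N} \<and> r + sum_list is = N}.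
          \<phi> r (map2 (\<lambda>e i. e - 2 * int i) es is) (map2 (\<lambda>c i. c i) cs is))
     else 0)"

end

theory Submission
  imports Defs
begin

lemma sgnmul_cong: "even k = even k' \<Longrightarrow> sgnmul k x = sgnmul k' x"
  by (simp add: sgnmul_def)

lemma sgnmul_add: "sgnmul k (x + y) = sgnmul k x + sgnmul k y"
  by (simp add: sgnmul_def)
lemma sgnmul_diff: "sgnmul k (x - y) = sgnmul k x - sgnmul k y"
  by (simp add: sgnmul_def)
lemma sgnmul_zero[simp]: "sgnmul k 0 = 0"
  by (simp add: sgnmul_def)
lemma sgnmul_sum: "sgnmul k (sum f A) = (\<Sum>a\<in>A. sgnmul k (f a))"
  by (simp add: sgnmul_def sum_negf)

lemma sum_fun_apply: "(sum F A) x = (\<Sum>a\<in>A. F a x)"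
  by (induction A rule: infinite_finite_induct) auto
lemma DCC_apply: "DCC D e f N = D (e - 2 * int N) (f N)"
  by (simp add: DCC_def)
lemma sgnmul_apply: "(sgnmul k f) x = sgnmul k (f x)"
  by (simp add: sgnmul_def)

lemma even_mult_cong: "even (a::int) = even b \<Longrightarrow> even (k * a) = even (k * b)"
  by simp

lemma sgnmul_shift: "sgnmul ((q - 2 * int r) * k) x = sgnmul (q * k) x"
  by (rule sgnmul_cong) (simp add: algebra_simps)

definition ushift :: "(nat \<Rightarrow> 'b::zero) \<Rightarrow> nat \<Rightarrow> 'b" where
  "ushift f = (\<lambda>N. if N = 0 then 0 else f (N - 1))"

lemma ushift_0[simp]: "ushift f 0 = 0" by (simp add: ushift_def)
lemma ushift_Suc[simp]: "ushift f (Suc N) = f N" by (simp add: ushift_def)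
lemma ushift_zero[simp]: "ushift (0::nat \<Rightarrow> 'b::zero) = 0" by (simp add: ushift_def fun_eq_iff)
lemma ushift_add: "ushift (f + g) = ushift f + (ushift g :: nat \<Rightarrow> 'b::monoid_add)"
  by (simp add: ushift_def fun_eq_iff)
lemma ushift_diff: "ushift (f - g) = ushift f - (ushift g :: nat \<Rightarrow> 'b::group_add)"
  by (simp add: ushift_def fun_eq_iff)
lemma ushift_sgnmul: "ushift (sgnmul k f) = sgnmul k (ushift f :: nat \<Rightarrow> 'b::ab_group_add)"
  by (simp add: ushift_def fun_eq_iff sgnmul_def)
lemma ushift_sum: "ushift (sum F A) = (\<Sum>a\<in>A. ushift (F a) :: nat \<Rightarrow> 'b::comm_monoid_add)"
  by (auto simp: fun_eq_iff ushift_def sum_fun_apply)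
lemma sgnmul_uminus: "sgnmul (- k) x = sgnmul k x"
  by (simp add: sgnmul_def)

lemma sum_reindex_sub:
  assumes "finite T" "inj_on h S" "h ` S \<subseteq> T" "\<And>x. x \<in> T \<Longrightarrow> x \<notin> h ` S \<Longrightarrow> g x = 0"
  shows "sum g T = sum (\<lambda>x. g (h x)) S"
proof -
  have "sum g T = sum g (h ` S)"
    using assms by (intro sum.mono_neutral_right) auto
  also have "\<dots> = sum (\<lambda>x. g (h x)) S"
    using assms(2) by (simp add: sum.reindex)
  finally show ?thesis .
qed

locale mx =
  fixes sc :: "'k::field \<Rightarrow> 'a::ab_group_add \<Rightarrow> 'a"
    and Ac :: "int \<Rightarrow> 'a set"
    and d Dl :: "int \<Rightarrow> 'a \<Rightarrow> 'a"
  assumes mx: "mixed_cx sc Ac d Dl"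
begin

lemma vs: "vector_space sc" using mx by (simp add: mixed_cx_def)

sublocale module sc using vs by (simp add: module_iff_vector_space)

lemma sub: "subspace (Ac e)" using mx by (simp add: mixed_cx_def)

lemma zero_in[simp]: "0 \<in> Ac e" using sub subspace_0 by blast
lemma add_in: "x \<in> Ac e \<Longrightarrow> y \<in> Ac e \<Longrightarrow> x + y \<in> Ac e" using sub subspace_add by blast
lemma diff_in: "x \<in> Ac e \<Longrightarrow> y \<in> Ac e \<Longrightarrow> x - y \<in> Ac e" using sub subspace_diff by blast
lemma neg_in: "x \<in> Ac e \<Longrightarrow> - x \<in> Ac e" using sub subspace_neg by blast
lemma scale_in: "x \<in> Ac e \<Longrightarrow> sc c x \<in> Ac e" using sub subspace_scale by blast
lemma sum_in: "(\<And>x. x \<in> B \<Longrightarrow> f x \<in> Ac e) \<Longrightarrow> sum f B \<in> Ac e" using sub subspace_sum by blast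
lemma sgnmul_in: "x \<in> Ac e \<Longrightarrow> sgnmul k x \<in> Ac e" by (simp add: sgnmul_def neg_in)

lemma d_in: "x \<in> Ac e \<Longrightarrow> d e x \<in> Ac (e + 1)" using mx by (simp add: mixed_cx_def)
lemma D_in: "x \<in> Ac e \<Longrightarrow> Dl e x \<in> Ac (e - 1)" using mx by (simp add: mixed_cx_def)
lemma d_add: "x \<in> Ac e \<Longrightarrow> y \<in> Ac e \<Longrightarrow> d e (x + y) = d e x + d e y" using mx by (simp add: mixed_cx_def)
lemma D_add: "x \<in> Ac e \<Longrightarrow> y \<in> Ac e \<Longrightarrow> Dl e (x + y) = Dl e x + Dl e y" using mx by (simp add: mixed_cx_def)
lemma d_scale: "x \<in> Ac e \<Longrightarrow> d e (sc c x) = sc c (d e x)" using mx by (simp add: mixed_cx_def)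
lemma D_scale: "x \<in> Ac e \<Longrightarrow> Dl e (sc c x) = sc c (Dl e x)" using mx by (simp add: mixed_cx_def)

lemma d_zero: "d e 0 = 0"
proof -
  have "d e (sc 0 0) = sc 0 (d e 0)" by (rule d_scale) simp
  thus ?thesis by simp
qed
lemma D_zero: "Dl e 0 = 0"
proof -
  have "Dl e (sc 0 0) = sc 0 (Dl e 0)" by (rule D_scale) simp
  thus ?thesis by simp
qed

lemma d_sum: "finite B \<Longrightarrow> (\<And>x. x \<in> B \<Longrightarrow> f x \<in> Ac e) \<Longrightarrow> d e (sum f B) = (\<Sum>x\<in>B. d e (f x))"
proof (induction B rule: finite_induct)
  case empty thus ?case by (simp add: d_zero)
next
  case (insert a B) thus ?case by (simp add: d_add sum_in)
qed
lemma D_sum: "finite B \<Longrightarrow> (\<And>x. x \<in> B \<Longrightarrow> f x \<in> Ac e) \<Longrightarrow> Dl e (sum f B) = (\<Sum>x\<in>B. Dl e (f x))"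
proof (induction B rule: finite_induct)
  case empty thus ?case by (simp add: D_zero)
next
  case (insert a B) thus ?case by (simp add: D_add sum_in)
qed

lemma indom_upd: "indom Ac n es xs \<Longrightarrow> j < n \<Longrightarrow> x \<in> Ac (es ! j) \<Longrightarrow> indom Ac n es (xs[j := x])"
  by (auto simp: indom_def nth_list_update)

lemma EndS_in: "F \<in> EndS sc Ac n p \<Longrightarrow> indom Ac n es xs \<Longrightarrow> F es xs \<in> Ac (sum_list es + p)"
  by (simp add: EndS_def)
lemma EndS_out: "F \<in> EndS sc Ac n p \<Longrightarrow> \<not> indom Ac n es xs \<Longrightarrow> F es xs = 0"
  by (simp add: EndS_def)
lemma EndS_add: "F \<in> EndS sc Ac n p \<Longrightarrow> indom Ac n es xs \<Longrightarrow> j < n \<Longrightarrow> x \<in> Ac (es ! j) \<Longrightarrow> y \<in> Ac (es ! j)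
   \<Longrightarrow> F es (xs[j := x + y]) = F es (xs[j := x]) + F es (xs[j := y])"
  by (simp add: EndS_def)
lemma EndS_scale: "F \<in> EndS sc Ac n p \<Longrightarrow> indom Ac n es xs \<Longrightarrow> j < n \<Longrightarrow> x \<in> Ac (es ! j)
   \<Longrightarrow> F es (xs[j := sc c x]) = sc c (F es (xs[j := x]))"
  by (simp add: EndS_def)

lemma EndS_zero_slot: "F \<in> EndS sc Ac n p \<Longrightarrow> indom Ac n es xs \<Longrightarrow> j < n \<Longrightarrow> F es (xs[j := 0]) = 0"
proof -
  assume a: "F \<in> EndS sc Ac n p" "indom Ac n es xs" "j < n"
  have "F es (xs[j := sc 0 0]) = sc 0 (F es (xs[j := 0]))"
    by (rule EndS_scale[OF a]) simp
  thus ?thesis by simp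
qed

lemma EndS_zero_slot': "F \<in> EndS sc Ac n p \<Longrightarrow> indom Ac n es xs \<Longrightarrow> j < n \<Longrightarrow> xs ! j = 0 \<Longrightarrow> F es xs = 0"
  using EndS_zero_slot[of F n p es xs j] by (metis list_update_id)

lemma EndS_sum: assumes F: "F \<in> EndS sc Ac n p" "indom Ac n es xs" "j < n" and "finite K" and
   "(\<And>k. k \<in> K \<Longrightarrow> g k \<in> Ac (es ! j))" shows
   "F es (xs[j := sum g K]) = (\<Sum>k\<in>K. F es (xs[j := g k]))"
  using assms(4,5) proof (induction K rule: finite_induct)
  case empty thus ?case using F by (simp add: EndS_zero_slot)
next
  case (insert a K)
  note F
  have "F es (xs[j := sum g (insert a K)]) = F es (xs[j := g a + sum g K])"
    using insert by simp
  also have "\<dots> = F es (xs[j := g a]) + F es (xs[j := sum g K])"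
    using insert F by (intro EndS_add) (auto intro: sum_in)
  finally show ?case using insert by simp
qed


end

definition idx :: "nat \<Rightarrow> nat \<Rightarrow> (nat \<times> nat list) set" where
  "idx n N = {(r, ii). r \<le> N \<and> length ii = n \<and> set ii \<subseteq> {..N} \<and> r + sum_list ii = N}"
definition sh :: "int list \<Rightarrow> nat list \<Rightarrow> int list" where
  "sh es ii = map2 (\<lambda>e i. e - 2 * int i) es ii"
definition ev :: "(nat \<Rightarrow> 'a) list \<Rightarrow> nat list \<Rightarrow> 'a list" where
  "ev cs ii = map2 (\<lambda>c i. c i) cs ii"

lemma idx_iff: "(r, ii) \<in> idx n N \<longleftrightarrow> length ii = n \<and> r + sum_list ii = N"
  unfolding idx_def using member_le_sum_list by fastforce

lemma finite_idx: "finite (idx n N)"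
proof -
  have "idx n N \<subseteq> {..N} \<times> {ii. set ii \<subseteq> {..N} \<and> length ii = n}"
    unfolding idx_def by auto
  moreover have "finite ({..N} \<times> {ii. set ii \<subseteq> {..N} \<and> length ii = n})"
    by (intro finite_cartesian_product finite_lists_length_eq) auto
  ultimately show ?thesis by (rule finite_subset)
qed

lemma length_sh[simp]: "length (sh es ii) = min (length es) (length ii)"
  by (simp add: sh_def)
lemma length_ev[simp]: "length (ev cs ii) = min (length cs) (length ii)"
  by (simp add: ev_def)
lemma nth_sh: "k < length es \<Longrightarrow> k < length ii \<Longrightarrow> sh es ii ! k = es ! k - 2 * int (ii ! k)"
  by (simp add: sh_def)
lemma nth_ev: "k < length cs \<Longrightarrow> k < length ii \<Longrightarrow> ev cs ii ! k = (cs ! k) (ii ! k)"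
  by (simp add: ev_def)

lemma sum_sh: "length es = length ii \<Longrightarrow> sum_list (sh es ii) = sum_list es - 2 * int (sum_list ii)"
  unfolding sh_def by (induction es ii rule: list_induct2) (auto simp: algebra_simps)

lemma sh_upd: "length es = length ii \<Longrightarrow> j < length es \<Longrightarrow>
   sh (es[j := e]) ii = (sh es ii)[j := e - 2 * int (ii ! j)]"
  by (rule nth_equalityI) (auto simp: nth_sh nth_list_update)
lemma ev_upd: "length cs = length ii \<Longrightarrow> j < length cs \<Longrightarrow>
   ev (cs[j := c]) ii = (ev cs ii)[j := c (ii ! j)]"
  by (rule nth_equalityI) (auto simp: nth_ev nth_list_update)

lemma take_sh: "length es = length ii \<Longrightarrow> take j (sh es ii) = sh (take j es) (take j ii)"
  by (simp add: sh_def take_zip take_map)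

lemma even_take_sh: "length es = length ii \<Longrightarrow>
   even (sum_list (take j (sh es ii))) = even (sum_list (take j es))"
  by (simp add: take_sh sum_sh)

lemma Phi_in: "indom (CCc Ac) n es cs \<Longrightarrow>
   Phi Ac n q \<phi> es cs N = (\<Sum>(r, ii)\<in>idx n N. \<phi> r (sh es ii) (ev cs ii))"
  by (simp add: Phi_def idx_def sh_def ev_def)
lemma Phi_out: "\<not> indom (CCc Ac) n es cs \<Longrightarrow> Phi Ac n q \<phi> es cs = 0"
  by (simp add: Phi_def)

lemma CCc_nth: "c \<in> CCc Ac e \<Longrightarrow> c i \<in> Ac (e - 2 * int i)"
  by (simp add: CCc_def)
lemma CCc_fin: "c \<in> CCc Ac e \<Longrightarrow> finite {i. c i \<noteq> 0}"
  by (simp add: CCc_def)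

context mx begin

lemma indom_sh: "indom (CCc Ac) n es cs \<Longrightarrow> length ii = n \<Longrightarrow> indom Ac n (sh es ii) (ev cs ii)"
  by (auto simp: indom_def nth_sh nth_ev intro: CCc_nth)

lemma CCc_add: "x \<in> CCc Ac e \<Longrightarrow> y \<in> CCc Ac e \<Longrightarrow> x + y \<in> CCc Ac e"
proof -
  assume a: "x \<in> CCc Ac e" "y \<in> CCc Ac e"
  have "{i. (x + y) i \<noteq> 0} \<subseteq> {i. x i \<noteq> 0} \<union> {i. y i \<noteq> 0}" by auto
  thus ?thesis using a unfolding CCc_def by (auto intro: finite_subset add_in)
qed

lemma CCc_scale: "x \<in> CCc Ac e \<Longrightarrow> scc sc c x \<in> CCc Ac e"
proof -
  assume a: "x \<in> CCc Ac e"
  have "{i. scc sc c x i \<noteq> 0} \<subseteq> {i. x i \<noteq> 0}" by (auto simp: scc_def)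
  thus ?thesis using a unfolding CCc_def by (auto intro: finite_subset scale_in simp: scc_def)
qed

lemma CCE_EndS: "\<phi> \<in> CCE sc Ac n q \<Longrightarrow> \<phi> r \<in> EndS sc Ac n (q - 2 * int r)"
  by (simp add: CCE_def)
lemma CCE_fin: "\<phi> \<in> CCE sc Ac n q \<Longrightarrow> finite {r. \<phi> r \<noteq> 0}"
  by (simp add: CCE_def)

lemma Phi_term_in:
  assumes "\<phi> \<in> CCE sc Ac n q" "indom (CCc Ac) n es cs" "(r, ii) \<in> idx n N"
  shows "\<phi> r (sh es ii) (ev cs ii) \<in> Ac (sum_list es + q - 2 * int N)"
proof -
  have l: "length ii = n" "r + sum_list ii = N" using assms(3) by (auto simp: idx_iff)
  have "\<phi> r (sh es ii) (ev cs ii) \<in> Ac (sum_list (sh es ii) + (q - 2 * int r))"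
    using assms l by (intro EndS_in[OF CCE_EndS] indom_sh)
  moreover have "sum_list (sh es ii) + (q - 2 * int r) = sum_list es + q - 2 * int N"
    using assms(2) l by (auto simp: sum_sh indom_def)
  ultimately show ?thesis by simp
qed

lemma Phi_val_in:
  assumes "\<phi> \<in> CCE sc Ac n q" "indom (CCc Ac) n es cs"
  shows "Phi Ac n q \<phi> es cs N \<in> Ac (sum_list es + q - 2 * int N)"
  using assms by (auto simp: Phi_in intro!: sum_in Phi_term_in)

lemma Phi_fin:
  assumes "\<phi> \<in> CCE sc Ac n q" "indom (CCc Ac) n es cs"
  shows "finite {N. Phi Ac n q \<phi> es cs N \<noteq> 0}"
proof -
  define Rs where "Rs = {r. \<phi> r \<noteq> 0}"
  define Ms where "Ms = (\<Union>j<n. {i. (cs ! j) i \<noteq> 0})"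
  define S where "S = (\<lambda>(r, ii). r + sum_list ii) ` (Rs \<times> {ii. set ii \<subseteq> Ms \<and> length ii = n})"
  have fR: "finite Rs" using assms CCE_fin Rs_def by simp
  have fM: "finite Ms" unfolding Ms_def using assms(2)
    by (intro finite_UN_I) (auto simp: indom_def intro: CCc_fin)
  have fS: "finite S" unfolding S_def using fR fM
    by (intro finite_imageI finite_cartesian_product finite_lists_length_eq)
  have "{N. Phi Ac n q \<phi> es cs N \<noteq> 0} \<subseteq> S"
  proof (rule subsetI, rule ccontr)
    fix N assume N: "N \<in> {N. Phi Ac n q \<phi> es cs N \<noteq> 0}" "N \<notin> S"
    have "\<phi> r (sh es ii) (ev cs ii) = 0" if ri: "(r, ii) \<in> idx n N" for r ii
    proof (cases "r \<in> Rs")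
      case False thus ?thesis by (simp add: Rs_def)
    next
      case True
      have l: "length ii = n" "r + sum_list ii = N" using ri by (auto simp: idx_iff)
      have "\<not> set ii \<subseteq> Ms"
      proof
        assume "set ii \<subseteq> Ms"
        hence "(r, ii) \<in> Rs \<times> {ii. set ii \<subseteq> Ms \<and> length ii = n}" using True l by auto
        hence "N \<in> S" unfolding S_def using l by (auto intro!: image_eqI[where x="(r, ii)"])
        thus False using N by simp
      qed
      then obtain j where j: "j < n" "ii ! j \<notin> Ms" using l by (metis in_set_conv_nth subsetI)
      have "(cs ! j) (ii ! j) = 0" using j Ms_def by auto
      hence "ev cs ii ! j = 0" using j l assms(2) by (simp add: nth_ev indom_def)
      moreover have "length cs = n" using assms(2) by (simp add: indom_def)
      ultimately show ?thesis using assms j l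
        by (intro EndS_zero_slot'[OF CCE_EndS[OF assms(1)] indom_sh]) auto
    qed
    hence "Phi Ac n q \<phi> es cs N = 0" using assms(2) by (simp add: Phi_in split_beta)
    thus False using N by simp
  qed
  thus ?thesis using fS by (rule finite_subset)
qed


lemma indom_CCc_upd: "indom (CCc Ac) n es xs \<Longrightarrow> j < n \<Longrightarrow> x \<in> CCc Ac (es ! j) \<Longrightarrow> indom (CCc Ac) n es (xs[j := x])"
  by (auto simp: indom_def nth_list_update)

lemma Phi_add_slot:
  assumes "\<phi> \<in> CCE sc Ac n q" "indom (CCc Ac) n es xs" "j < n" "x \<in> CCc Ac (es ! j)" "y \<in> CCc Ac (es ! j)"
  shows "Phi Ac n q \<phi> es (xs[j := x + y]) = Phi Ac n q \<phi> es (xs[j := x]) + Phi Ac n q \<phi> es (xs[j := y])"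
proof (rule ext)
  fix N
  have L: "length es = n" "length xs = n" using assms(2) by (auto simp: indom_def)
  have "\<phi> r (sh es ii) (ev (xs[j := x + y]) ii) = \<phi> r (sh es ii) (ev (xs[j := x]) ii) + \<phi> r (sh es ii) (ev (xs[j := y]) ii)"
    if ri: "(r, ii) \<in> idx n N" for r ii
  proof -
    have l: "length ii = n" using ri by (simp add: idx_iff)
    have "\<phi> r (sh es ii) ((ev xs ii)[j := x (ii ! j) + y (ii ! j)]) = \<phi> r (sh es ii) ((ev xs ii)[j := x (ii ! j)]) + \<phi> r (sh es ii) ((ev xs ii)[j := y (ii ! j)])"
      using assms l L by (intro EndS_add[OF CCE_EndS indom_sh]) (auto simp: nth_sh intro: CCc_nth)
    thus ?thesis using L l assms by (simp add: ev_upd)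
  qed
  thus "Phi Ac n q \<phi> es (xs[j := x + y]) N = (Phi Ac n q \<phi> es (xs[j := x]) + Phi Ac n q \<phi> es (xs[j := y])) N"
    using assms by (simp add: Phi_in indom_CCc_upd CCc_add split_beta sum.distrib[symmetric] cong: sum.cong)
qed

lemma Phi_scale_slot:
  assumes "\<phi> \<in> CCE sc Ac n q" "indom (CCc Ac) n es xs" "j < n" "x \<in> CCc Ac (es ! j)"
  shows "Phi Ac n q \<phi> es (xs[j := scc sc c x]) = scc sc c (Phi Ac n q \<phi> es (xs[j := x]))"
proof (rule ext)
  fix N
  have L: "length es = n" "length xs = n" using assms(2) by (auto simp: indom_def)
  have "\<phi> r (sh es ii) (ev (xs[j := scc sc c x]) ii) = sc c (\<phi> r (sh es ii) (ev (xs[j := x]) ii))"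
    if ri: "(r, ii) \<in> idx n N" for r ii
  proof -
    have l: "length ii = n" using ri by (simp add: idx_iff)
    have "\<phi> r (sh es ii) ((ev xs ii)[j := sc c (x (ii ! j))]) = sc c (\<phi> r (sh es ii) ((ev xs ii)[j := x (ii ! j)]))"
      using assms l L by (intro EndS_scale[OF CCE_EndS indom_sh]) (auto simp: nth_sh intro: CCc_nth)
    thus ?thesis using L l assms by (simp add: ev_upd scc_def)
  qed
  note eq = this
  have i1: "indom (CCc Ac) n es (xs[j := scc sc c x])" "indom (CCc Ac) n es (xs[j := x])"
    using assms by (auto intro: indom_CCc_upd CCc_scale)
  have "Phi Ac n q \<phi> es (xs[j := scc sc c x]) N = (\<Sum>(r, ii)\<in>idx n N. \<phi> r (sh es ii) (ev (xs[j := scc sc c x]) ii))"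
    by (rule Phi_in[OF i1(1)])
  also have "\<dots> = (\<Sum>(r, ii)\<in>idx n N. sc c (\<phi> r (sh es ii) (ev (xs[j := x]) ii)))"
    by (rule sum.cong) (use eq in \<open>auto simp: scc_def\<close>)
  also have "\<dots> = sc c (\<Sum>(r, ii)\<in>idx n N. \<phi> r (sh es ii) (ev (xs[j := x]) ii))"
    by (simp add: scale_sum_right split_beta)
  also have "\<dots> = scc sc c (Phi Ac n q \<phi> es (xs[j := x])) N"
    by (simp add: Phi_in[OF i1(2)] scc_def)
  finally show "Phi Ac n q \<phi> es (xs[j := scc sc c x]) N = scc sc c (Phi Ac n q \<phi> es (xs[j := x])) N" .
qed

lemma Phi_EndS: "\<phi> \<in> CCE sc Ac n q \<Longrightarrow> Phi Ac n q \<phi> \<in> EndS (scc sc) (CCc Ac) n q"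
  unfolding EndS_def
proof (intro CollectI conjI allI impI)
  fix es xs assume a: "\<phi> \<in> CCE sc Ac n q" "indom (CCc Ac) n es xs"
  have "Phi Ac n q \<phi> es xs i \<in> Ac (sum_list es + q - 2 * int i)" for i
    using Phi_val_in[OF a] .
  thus "Phi Ac n q \<phi> es xs \<in> CCc Ac (sum_list es + q)"
    using Phi_fin[OF a] by (simp add: CCc_def)
qed (auto simp: Phi_out Phi_add_slot Phi_scale_slot)

lemma Phi_plus: "Phi Ac n q (\<phi> + \<psi>) = Phi Ac n q \<phi> + Phi Ac n q \<psi>"
proof (intro ext)
  fix es cs N
  show "Phi Ac n q (\<phi> + \<psi>) es cs N = (Phi Ac n q \<phi> + Phi Ac n q \<psi>) es cs N"
    by (cases "indom (CCc Ac) n es cs") (simp_all add: Phi_in Phi_out split_beta sum.distrib)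
qed

lemma Phi_fscale: "Phi Ac n q (\<lambda>r. fscale sc c (\<phi> r)) = fscale (scc sc) c (Phi Ac n q \<phi>)"
proof (intro ext)
  fix es cs N
  show "Phi Ac n q (\<lambda>r. fscale sc c (\<phi> r)) es cs N = fscale (scc sc) c (Phi Ac n q \<phi>) es cs N"
    by (cases "indom (CCc Ac) n es cs") (simp_all add: Phi_in Phi_out split_beta fscale_def scc_def scale_sum_right)
qed


lemma Phi_basic:
  assumes ph: "\<phi> \<in> CCE sc Ac n q" and ind: "indom Ac n es xs"
  defines "cs \<equiv> map (\<lambda>k i. if i = 0 then xs ! k else 0) [0..<n]"
  shows "Phi Ac n q \<phi> es cs r = \<phi> r es xs"
proof -
  have L: "length es = n" "length xs = n" using ind by (auto simp: indom_def)
  have ic: "indom (CCc Ac) n es cs"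
    unfolding indom_def cs_def CCc_def using ind L
    by (auto simp: indom_def intro: finite_subset[of _ "{0}"])
  have m: "(r, replicate n 0) \<in> idx n r" by (simp add: idx_iff)
  have "Phi Ac n q \<phi> es cs r = (\<Sum>(s, ii)\<in>idx n r. \<phi> s (sh es ii) (ev cs ii))"
    by (rule Phi_in[OF ic])
  also have "\<dots> = \<phi> r (sh es (replicate n 0)) (ev cs (replicate n 0))
        + (\<Sum>(s, ii)\<in>idx n r - {(r, replicate n 0)}. \<phi> s (sh es ii) (ev cs ii))"
    using m finite_idx by (simp add: sum.remove split_beta)
  also have "(\<Sum>(s, ii)\<in>idx n r - {(r, replicate n 0)}. \<phi> s (sh es ii) (ev cs ii)) = 0"
  proof (rule sum.neutral, rule ballI)
    fix p assume "p \<in> idx n r - {(r, replicate n 0)}"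
    then obtain s ii where p: "p = (s, ii)" and a: "(s, ii) \<in> idx n r" "(s, ii) \<notin> {(r, replicate n 0)}"
      by (cases p) auto
    have l: "length ii = n" "s + sum_list ii = r" using a by (auto simp: idx_iff)
    have "ii \<noteq> replicate n 0"
    proof
      assume "ii = replicate n 0"
      hence "s = r" using l by (simp add: sum_list_replicate)
      thus False using a \<open>ii = replicate n 0\<close> by simp
    qed
    then obtain k where k: "k < n" "ii ! k \<noteq> 0" using l
      by (metis in_set_conv_nth replicate_eqI)
    have "ev cs ii ! k = 0" using k l by (simp add: nth_ev cs_def)
    hence "\<phi> s (sh es ii) (ev cs ii) = 0" using k l ic
      by (intro EndS_zero_slot'[OF CCE_EndS[OF ph] indom_sh]) (auto simp: cs_def)
    thus "(\<lambda>(s, ii). \<phi> s (sh es ii) (ev cs ii)) p = 0" using p by simp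
  qed
  also have "sh es (replicate n 0) = es" using L by (intro nth_equalityI) (auto simp: nth_sh)
  also have "ev cs (replicate n 0) = xs" using L by (intro nth_equalityI) (auto simp: nth_ev cs_def)
  finally show ?thesis by simp
qed

lemma Phi_inj: "inj_on (Phi Ac n q) (CCE sc Ac n q)"
proof (rule inj_onI)
  fix \<phi> \<psi> assume a: "\<phi> \<in> CCE sc Ac n q" "\<psi> \<in> CCE sc Ac n q" "Phi Ac n q \<phi> = Phi Ac n q \<psi>"
  show "\<phi> = \<psi>"
  proof (intro ext)
    fix r es xs
    show "\<phi> r es xs = \<psi> r es xs"
    proof (cases "indom Ac n es xs")
      case True
      thus ?thesis using Phi_basic[OF a(1) True, of r] Phi_basic[OF a(2) True, of r] a(3) by simp
    next
      case False
      thus ?thesis using a EndS_out CCE_EndS by metis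
    qed
  qed
qed


lemma Phi_unit: "Phi Ac 1 0 (unitCCE Ac) = unitEnd (CCc Ac)"
proof (intro ext)
  fix es cs N
  show "Phi Ac 1 0 (unitCCE Ac) es cs N = unitEnd (CCc Ac) es cs N"
  proof (cases "indom (CCc Ac) 1 es cs")
    case False thus ?thesis by (simp add: Phi_out unitEnd_def)
  next
    case True
    have L: "length es = 1" "length cs = 1" using True by (auto simp: indom_def)
    have m: "(0, [N]) \<in> idx 1 N" by (simp add: idx_iff)
    have "Phi Ac 1 0 (unitCCE Ac) es cs N = (\<Sum>(r, ii)\<in>idx 1 N. unitCCE Ac r (sh es ii) (ev cs ii))"
      by (rule Phi_in[OF True])
    also have "\<dots> = unitCCE Ac 0 (sh es [N]) (ev cs [N])
        + (\<Sum>(r, ii)\<in>idx 1 N - {(0, [N])}. unitCCE Ac r (sh es ii) (ev cs ii))"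
      using m finite_idx by (simp add: sum.remove split_beta)
    also have "(\<Sum>(r, ii)\<in>idx 1 N - {(0, [N])}. unitCCE Ac r (sh es ii) (ev cs ii)) = 0"
    proof (rule sum.neutral, rule ballI)
      fix p assume "p \<in> idx 1 N - {(0, [N])}"
      then obtain r ii where p: "p = (r, ii)" and a: "(r, ii) \<in> idx 1 N" "(r, ii) \<noteq> (0, [N])"
        by (cases p) auto
      have l: "length ii = 1" "r + sum_list ii = N" using a by (auto simp: idx_iff)
      then obtain i where "ii = [i]" by (cases ii) auto
      hence "r \<noteq> 0" using a l by auto
      thus "(\<lambda>(r, ii). unitCCE Ac r (sh es ii) (ev cs ii)) p = 0" using p by (simp add: unitCCE_def)
    qed
    also have "unitCCE Ac 0 (sh es [N]) (ev cs [N]) = (cs ! 0) N"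
      using True L by (simp add: unitCCE_def unitEnd_def indom_def nth_sh nth_ev CCc_nth)
    finally show ?thesis using True by (simp add: unitEnd_def)
  qed
qed


lemma gen_sum:
  assumes Dadd: "\<And>e x y. x \<in> Ac e \<Longrightarrow> y \<in> Ac e \<Longrightarrow> D e (x + y) = D e x + D e y"
    and D0: "\<And>e. D e 0 = 0"
  shows "finite B \<Longrightarrow> (\<And>x. x \<in> B \<Longrightarrow> f x \<in> Ac e) \<Longrightarrow> D e (sum f B) = (\<Sum>x\<in>B. D e (f x))"
proof (induction B rule: finite_induct)
  case empty thus ?case by (simp add: D0)
next
  case (insert a B) thus ?case by (simp add: Dadd sum_in)
qed

lemma DCC_in:
  assumes Dm: "\<And>e x. x \<in> Ac e \<Longrightarrow> D e x \<in> Ac (e + k)" and D0: "\<And>e. D e 0 = 0"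
    and c: "c \<in> CCc Ac e"
  shows "DCC D e c \<in> CCc Ac (e + k)"
proof -
  have "{i. DCC D e c i \<noteq> 0} \<subseteq> {i. c i \<noteq> 0}" by (auto simp: DCC_def D0)
  moreover have "DCC D e c i \<in> Ac (e + k - 2 * int i)" for i
    using Dm[OF CCc_nth[OF c, of i]] by (simp add: DCC_def algebra_simps)
  ultimately show ?thesis using CCc_fin[OF c] by (auto simp: CCc_def intro: finite_subset)
qed

lemma bracket_DCC:
  assumes ph: "\<phi> \<in> CCE sc Ac n q"
    and Dm: "\<And>e x. x \<in> Ac e \<Longrightarrow> D e x \<in> Ac (e + k)"
    and Dadd: "\<And>e x y. x \<in> Ac e \<Longrightarrow> y \<in> Ac e \<Longrightarrow> D e (x + y) = D e x + D e y"
    and D0: "\<And>e. D e 0 = 0"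
  shows "Phi Ac n q' (\<lambda>r. ebracket Ac D k n (q - 2 * int r) (\<phi> r))
       = ebracket (CCc Ac) (DCC D) k n q (Phi Ac n q \<phi>)"
proof (intro ext)
  fix es cs N
  show "Phi Ac n q' (\<lambda>r. ebracket Ac D k n (q - 2 * int r) (\<phi> r)) es cs N
       = ebracket (CCc Ac) (DCC D) k n q (Phi Ac n q \<phi>) es cs N"
  proof (cases "indom (CCc Ac) n es cs")
    case False thus ?thesis by (simp add: Phi_out ebracket_def)
  next
    case True
    have L: "length es = n" "length cs = n" using True by (auto simp: indom_def)
    define T where "T = (\<lambda>j r ii. \<phi> r ((sh es ii)[j := es ! j + k - 2 * int (ii ! j)])
                 ((ev cs ii)[j := D (es ! j - 2 * int (ii ! j)) ((cs ! j) (ii ! j))]))"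
    have A: "Phi Ac n q' (\<lambda>r. ebracket Ac D k n (q - 2 * int r) (\<phi> r)) es cs N
      = (\<Sum>(r, ii)\<in>idx n N. D (sum_list es + q - 2 * int N) (\<phi> r (sh es ii) (ev cs ii))
          - sgnmul (q * k) (\<Sum>j<n. sgnmul (k * sum_list (take j es)) (T j r ii)))"
      unfolding Phi_in[OF True]
    proof (rule sum.cong[OF refl], clarify)
      fix r ii assume ri: "(r, ii) \<in> idx n N"
      have l: "length ii = n" "r + sum_list ii = N" using ri by (auto simp: idx_iff)
      have i: "indom Ac n (sh es ii) (ev cs ii)" by (rule indom_sh[OF True l(1)])
      have s1: "sum_list (sh es ii) + (q - 2 * int r) = sum_list es + q - 2 * int N"
        using l L by (auto simp: sum_sh)
      have s2: "sgnmul (k * sum_list (take j (sh es ii))) x = sgnmul (k * sum_list (take j es)) x" for j x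
        by (rule sgnmul_cong, rule even_mult_cong, rule even_take_sh) (use l L in simp)
      have s3: "\<phi> r ((sh es ii)[j := sh es ii ! j + k]) ((ev cs ii)[j := D (sh es ii ! j) (ev cs ii ! j)]) = T j r ii"
        if "j < n" for j
        using that l L by (simp add: T_def nth_sh nth_ev algebra_simps)
      show "ebracket Ac D k n (q - 2 * int r) (\<phi> r) (sh es ii) (ev cs ii)
          = D (sum_list es + q - 2 * int N) (\<phi> r (sh es ii) (ev cs ii))
          - sgnmul (q * k) (\<Sum>j<n. sgnmul (k * sum_list (take j es)) (T j r ii))"
      proof -
        have "ebracket Ac D k n (q - 2 * int r) (\<phi> r) (sh es ii) (ev cs ii)
          = D (sum_list (sh es ii) + (q - 2 * int r)) (\<phi> r (sh es ii) (ev cs ii))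
            - sgnmul ((q - 2 * int r) * k) (\<Sum>j<n. sgnmul (k * sum_list (take j (sh es ii)))
               (\<phi> r ((sh es ii)[j := sh es ii ! j + k]) ((ev cs ii)[j := D (sh es ii ! j) (ev cs ii ! j)])))"
          by (simp add: ebracket_def i)
        also have "\<dots> = D (sum_list es + q - 2 * int N) (\<phi> r (sh es ii) (ev cs ii))
          - sgnmul (q * k) (\<Sum>j<n. sgnmul (k * sum_list (take j es)) (T j r ii))"
          by (simp only: s1 sgnmul_shift s2) (simp add: s3)
        finally show ?thesis .
      qed
    qed
    have B1: "Phi Ac n q \<phi> (es[j := es ! j + k]) (cs[j := DCC D (es ! j) (cs ! j)]) N
        = (\<Sum>(r, ii)\<in>idx n N. T j r ii)" if j: "j < n" for j
    proof -
      have c: "cs ! j \<in> CCc Ac (es ! j)" using True j by (simp add: indom_def)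
      have i: "indom (CCc Ac) n (es[j := es ! j + k]) (cs[j := DCC D (es ! j) (cs ! j)])"
        using True j DCC_in[of D k, OF Dm D0 c] by (auto simp: indom_def nth_list_update)
      show ?thesis unfolding Phi_in[OF i]
      proof (rule sum.cong[OF refl], clarify)
        fix r ii assume ri: "(r, ii) \<in> idx n N"
        have l: "length ii = n" using ri by (auto simp: idx_iff)
        show "\<phi> r (sh (es[j := es ! j + k]) ii) (ev (cs[j := DCC D (es ! j) (cs ! j)]) ii) = T j r ii"
          using l L j by (simp add: sh_upd ev_upd T_def DCC_def algebra_simps)
      qed
    qed
    have B: "ebracket (CCc Ac) (DCC D) k n q (Phi Ac n q \<phi>) es cs N
      = D (sum_list es + q - 2 * int N) (\<Sum>(r, ii)\<in>idx n N. \<phi> r (sh es ii) (ev cs ii))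
        - sgnmul (q * k) (\<Sum>j<n. sgnmul (k * sum_list (take j es)) (\<Sum>(r, ii)\<in>idx n N. T j r ii))"
    proof -
      have "ebracket (CCc Ac) (DCC D) k n q (Phi Ac n q \<phi>) es cs N
        = DCC D (sum_list es + q) (Phi Ac n q \<phi> es cs) N
          - sgnmul (q * k) (\<Sum>j<n. sgnmul (k * sum_list (take j es)) (Phi Ac n q \<phi> (es[j := es ! j + k]) (cs[j := DCC D (es ! j) (cs ! j)]) N))"
        using True by (simp add: ebracket_def sum_fun_apply sgnmul_apply)
      also have "\<dots> = D (sum_list es + q - 2 * int N) (\<Sum>(r, ii)\<in>idx n N. \<phi> r (sh es ii) (ev cs ii))
        - sgnmul (q * k) (\<Sum>j<n. sgnmul (k * sum_list (take j es)) (\<Sum>(r, ii)\<in>idx n N. T j r ii))"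
      proof -
        have "(\<Sum>j<n. sgnmul (k * sum_list (take j es)) (Phi Ac n q \<phi> (es[j := es ! j + k]) (cs[j := DCC D (es ! j) (cs ! j)]) N))
          = (\<Sum>j<n. sgnmul (k * sum_list (take j es)) (\<Sum>(r, ii)\<in>idx n N. T j r ii))"
          by (rule sum.cong) (auto simp: B1)
        thus ?thesis using True by (simp add: Phi_in DCC_apply)
      qed
      finally show ?thesis .
    qed
    have C: "D (sum_list es + q - 2 * int N) (\<Sum>(r, ii)\<in>idx n N. \<phi> r (sh es ii) (ev cs ii))
        = (\<Sum>(r, ii)\<in>idx n N. D (sum_list es + q - 2 * int N) (\<phi> r (sh es ii) (ev cs ii)))"
    proof -
      have "D (sum_list es + q - 2 * int N) (sum (\<lambda>(r, ii). \<phi> r (sh es ii) (ev cs ii)) (idx n N))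
         = (\<Sum>x\<in>idx n N. D (sum_list es + q - 2 * int N) ((\<lambda>(r, ii). \<phi> r (sh es ii) (ev cs ii)) x))"
        by (rule gen_sum[where D=D, OF Dadd D0 finite_idx]) (use Phi_term_in[OF ph True] in auto)
      thus ?thesis by (simp add: split_beta)
    qed
    have E: "(\<Sum>(r, ii)\<in>idx n N. sgnmul (q * k) (\<Sum>j<n. sgnmul (k * sum_list (take j es)) (T j r ii)))
       = sgnmul (q * k) (\<Sum>j<n. sgnmul (k * sum_list (take j es)) (\<Sum>(r, ii)\<in>idx n N. T j r ii))"
      by (simp add: sgnmul_sum split_beta sum.swap[of _ "idx n N"])
    show ?thesis unfolding A B C E[symmetric] by (simp add: sum_subtractf split_beta)
  qed
qed


lemma Phi_shift:
  "Phi Ac n q' (\<lambda>r. if r = 0 then 0 else \<chi> (r - 1)) es cs = ushift (Phi Ac n q \<chi> es cs)"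
proof (cases "indom (CCc Ac) n es cs")
  case False thus ?thesis by (simp add: Phi_out)
next
  case True
  show ?thesis
  proof (rule ext)
    fix N
    show "Phi Ac n q' (\<lambda>r. if r = 0 then 0 else \<chi> (r - 1)) es cs N = ushift (Phi Ac n q \<chi> es cs) N"
    proof (cases N)
      case 0
      have "(\<lambda>(r, ii). (if r = 0 then 0 else \<chi> (r - 1)) (sh es ii) (ev cs ii)) p = 0" if "p \<in> idx n 0" for p
      proof -
        obtain r ii where p: "p = (r, ii)" by (cases p)
        thus ?thesis using that by (simp add: idx_iff)
      qed
      thus ?thesis using 0 by (simp add: Phi_in[OF True] sum.neutral)
    next
      case (Suc M)
      have "Phi Ac n q' (\<lambda>r. if r = 0 then 0 else \<chi> (r - 1)) es cs N
         = (\<Sum>(r, ii)\<in>idx n N. (if r = 0 then 0 else \<chi> (r - 1)) (sh es ii) (ev cs ii))"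
        by (rule Phi_in[OF True])
      also have "\<dots> = (\<Sum>p\<in>idx n M. (\<lambda>(r, ii). (if r = 0 then 0 else \<chi> (r - 1)) (sh es ii) (ev cs ii)) ((\<lambda>(r, ii). (Suc r, ii)) p))"
      proof (rule sum_reindex_sub[OF finite_idx])
        show "inj_on (\<lambda>(r, ii). (Suc r, ii)) (idx n M)" by (auto simp: inj_on_def)
        show "(\<lambda>(r, ii). (Suc r, ii)) ` idx n M \<subseteq> idx n N" using Suc by (auto simp: idx_iff)
        fix x assume x: "x \<in> idx n N" "x \<notin> (\<lambda>(r, ii). (Suc r, ii)) ` idx n M"
        obtain r ii where xr: "x = (r, ii)" by (cases x)
        have "r = 0"
        proof (rule ccontr)
          assume "r \<noteq> 0"
          then obtain r' where "r = Suc r'" by (cases r) auto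
          hence "x = (\<lambda>(r, ii). (Suc r, ii)) (r', ii)" "(r', ii) \<in> idx n M"
            using x xr Suc by (auto simp: idx_iff)
          thus False using x by blast
        qed
        thus "(\<lambda>(r, ii). (if r = 0 then 0 else \<chi> (r - 1)) (sh es ii) (ev cs ii)) x = 0" using xr by simp
      qed
      also have "\<dots> = Phi Ac n q \<chi> es cs M"
        by (simp add: Phi_in[OF True] split_beta)
      finally show ?thesis using Suc by simp
    qed
  qed
qed

lemma ushift_CCc: "c \<in> CCc Ac e \<Longrightarrow> ushift c \<in> CCc Ac (e + 2)"
proof -
  assume c: "c \<in> CCc Ac e"
  have "{i. ushift c i \<noteq> 0} \<subseteq> Suc ` {i. c i \<noteq> 0}"
  proof
    fix i assume "i \<in> {i. ushift c i \<noteq> 0}"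
    thus "i \<in> Suc ` {i. c i \<noteq> 0}" by (cases i) auto
  qed
  moreover have "ushift c i \<in> Ac (e + 2 - 2 * int i)" for i
  proof (cases i)
    case (Suc m) thus ?thesis using CCc_nth[OF c, of m] by (simp add: algebra_simps)
  qed simp
  ultimately show ?thesis using CCc_fin[OF c] by (auto simp: CCc_def intro: finite_subset)
qed

lemma Phi_ushift_slot:
  assumes ph: "\<phi> \<in> CCE sc Ac n q" and ind: "indom (CCc Ac) n es cs" and j: "j < n" and c: "c \<in> CCc Ac e"
  shows "Phi Ac n q \<phi> (es[j := e + 2]) (cs[j := ushift c]) = ushift (Phi Ac n q \<phi> (es[j := e]) (cs[j := c]))"
proof (rule ext)
  fix N
  have L: "length es = n" "length cs = n" using ind by (auto simp: indom_def)
  have i1: "indom (CCc Ac) n (es[j := e + 2]) (cs[j := ushift c])"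
    using ind j ushift_CCc[OF c] by (auto simp: indom_def nth_list_update)
  have i0: "indom (CCc Ac) n (es[j := e]) (cs[j := c])"
    using ind j c by (auto simp: indom_def nth_list_update)
  define g where "g = (\<lambda>(r, ii). \<phi> r (sh (es[j := e + 2]) ii) (ev (cs[j := ushift c]) ii))"
  have z: "g (r, ii) = 0" if "(r, ii) \<in> idx n N" "ii ! j = 0" for r ii
  proof -
    have l: "length ii = n" using that by (simp add: idx_iff)
    have "ev (cs[j := ushift c]) ii ! j = 0" using that l L j by (simp add: nth_ev)
    thus ?thesis unfolding g_def using l L j i1
      by (simp, intro EndS_zero_slot'[OF CCE_EndS[OF ph] indom_sh[OF i1]]) auto
  qed
  show "Phi Ac n q \<phi> (es[j := e + 2]) (cs[j := ushift c]) N = ushift (Phi Ac n q \<phi> (es[j := e]) (cs[j := c])) N"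
  proof (cases N)
    case 0
    have "g p = 0" if "p \<in> idx n 0" for p
    proof -
      obtain r ii where p: "p = (r, ii)" by (cases p)
      have l: "length ii = n" "r + sum_list ii = 0" using that p by (auto simp: idx_iff)
      have "ii ! j \<le> sum_list ii" using l j by (intro member_le_sum_list) auto
      hence "ii ! j = 0" using l by linarith
      thus ?thesis using z that p 0 by simp
    qed
    thus ?thesis using 0 by (simp add: Phi_in[OF i1] sum.neutral g_def[symmetric])
  next
    case (Suc M)
    let ?h = "\<lambda>(r, ii). (r, ii[j := Suc (ii ! j)])"
    have "Phi Ac n q \<phi> (es[j := e + 2]) (cs[j := ushift c]) N = sum g (idx n N)"
      by (simp add: Phi_in[OF i1] g_def)
    also have "\<dots> = sum (\<lambda>p. g (?h p)) (idx n M)"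
    proof (rule sum_reindex_sub[OF finite_idx])
      show "inj_on ?h (idx n M)"
      proof (rule inj_on_inverseI[where g="\<lambda>(r, ii). (r, ii[j := ii ! j - 1])"])
        fix x assume "x \<in> idx n M"
        thus "(\<lambda>(r, ii). (r, ii[j := ii ! j - 1])) (?h x) = x" using j
          by (cases x) (auto simp: idx_iff)
      qed
      show "?h ` idx n M \<subseteq> idx n N"
        using Suc j by (auto simp: idx_iff sum_list_update)
      fix x assume x: "x \<in> idx n N" "x \<notin> ?h ` idx n M"
      obtain r ii where xr: "x = (r, ii)" by (cases x)
      have l: "length ii = n" "r + sum_list ii = N" using x xr by (auto simp: idx_iff)
      have "ii ! j = 0"
      proof (rule ccontr)
        assume nz: "ii ! j \<noteq> 0"
        define ii' where "ii' = ii[j := ii ! j - 1]"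
        have "ii ! j \<le> sum_list ii" using l j by (intro member_le_sum_list) auto
        hence "(r, ii') \<in> idx n M" using l nz j Suc by (auto simp: idx_iff ii'_def sum_list_update)
        moreover have "?h (r, ii') = x" using xr nz j l by (auto simp: ii'_def)
        ultimately show False using x by blast
      qed
      thus "g x = 0" using z x xr by simp
    qed
    also have "\<dots> = Phi Ac n q \<phi> (es[j := e]) (cs[j := c]) M"
      unfolding Phi_in[OF i0]
    proof (rule sum.cong[OF refl], clarify)
      fix r ii assume "(r, ii) \<in> idx n M"
      hence l: "length ii = n" by (simp add: idx_iff)
      have "sh (es[j := e + 2]) (ii[j := Suc (ii ! j)]) = sh (es[j := e]) ii"
        using l L j by (intro nth_equalityI) (auto simp: nth_sh nth_list_update)
      moreover have "ev (cs[j := ushift c]) (ii[j := Suc (ii ! j)]) = ev (cs[j := c]) ii"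
        using l L j by (intro nth_equalityI) (auto simp: nth_ev nth_list_update)
      ultimately show "g (r, ii[j := Suc (ii ! j)]) = \<phi> r (sh (es[j := e]) ii) (ev (cs[j := c]) ii)"
        by (simp add: g_def)
    qed
    finally show ?thesis using Suc by simp
  qed
qed


lemma dCC_split: "dCC d Dl e c = DCC d e c + ushift (DCC Dl e c)"
proof (rule ext)
  fix i show "dCC d Dl e c i = (DCC d e c + ushift (DCC Dl e c)) i"
    by (cases i) (simp_all add: dCC_def DCC_def algebra_simps)
qed

lemma part5: "\<phi> \<in> CCE sc Ac n q \<Longrightarrow>
   Phi Ac n (q - 1) (DCCE Ac Dl n q \<phi>) = ebracket (CCc Ac) (DCC Dl) (-1) n q (Phi Ac n q \<phi>)"
  unfolding DCCE_def
  by (rule bracket_DCC[where D=Dl and k="-1"]) (use D_in D_add D_zero in auto)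

lemma part4:
  assumes ph: "\<phi> \<in> CCE sc Ac n q"
  shows "Phi Ac n (q + 1) (dCCE Ac d Dl n q \<phi>) = ebracket (CCc Ac) (dCC d Dl) 1 n q (Phi Ac n q \<phi>)"
proof (intro ext)
  fix es cs N
  define \<chi>d where "\<chi>d = (\<lambda>r. ebracket Ac d 1 n (q - 2 * int r) (\<phi> r))"
  define \<chi>D where "\<chi>D = (\<lambda>r. ebracket Ac Dl (-1) n (q - 2 * int r) (\<phi> r))"
  have spl: "dCCE Ac d Dl n q \<phi> = \<chi>d + (\<lambda>r. if r = 0 then 0 else \<chi>D (r - 1))"
  proof (rule ext)
    fix r show "dCCE Ac d Dl n q \<phi> r = (\<chi>d + (\<lambda>r. if r = 0 then 0 else \<chi>D (r - 1))) r"
      by (cases r) (simp_all add: dCCE_def \<chi>d_def \<chi>D_def algebra_simps)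
  qed
  have P1: "Phi Ac n (q + 1) \<chi>d = ebracket (CCc Ac) (DCC d) 1 n q (Phi Ac n q \<phi>)"
    unfolding \<chi>d_def by (rule bracket_DCC[where D=d and k=1]) (use ph d_in d_add d_zero in auto)
  have P2: "Phi Ac n (q + 1) (\<lambda>r. if r = 0 then 0 else \<chi>D (r - 1)) es cs
      = ushift (ebracket (CCc Ac) (DCC Dl) (-1) n q (Phi Ac n q \<phi>) es cs)"
    using Phi_shift[of n "q + 1" \<chi>D es cs "q - 1"] part5[OF ph] unfolding DCCE_def \<chi>D_def by simp
  have L: "Phi Ac n (q + 1) (dCCE Ac d Dl n q \<phi>) es cs
     = ebracket (CCc Ac) (DCC d) 1 n q (Phi Ac n q \<phi>) es cs
       + ushift (ebracket (CCc Ac) (DCC Dl) (-1) n q (Phi Ac n q \<phi>) es cs)"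
    unfolding spl Phi_plus plus_fun_apply P1 P2 ..
  show "Phi Ac n (q + 1) (dCCE Ac d Dl n q \<phi>) es cs N = ebracket (CCc Ac) (dCC d Dl) 1 n q (Phi Ac n q \<phi>) es cs N"
  proof (cases "indom (CCc Ac) n es cs")
    case False thus ?thesis unfolding L by (simp add: ebracket_def)
  next
    case True
    let ?F = "Phi Ac n q \<phi>"
    let ?E = "sum_list es + q"
    define A where "A = (\<lambda>j. ?F (es[j := es ! j + 1]) (cs[j := DCC d (es ! j) (cs ! j)]))"
    define B where "B = (\<lambda>j. ?F (es[j := es ! j - 1]) (cs[j := DCC Dl (es ! j) (cs ! j)]))"
    have slot: "?F (es[j := es ! j + 1]) (cs[j := dCC d Dl (es ! j) (cs ! j)]) = A j + ushift (B j)"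
      if j: "j < n" for j
    proof -
      have c: "cs ! j \<in> CCc Ac (es ! j)" using True j by (simp add: indom_def)
      have a: "DCC d (es ! j) (cs ! j) \<in> CCc Ac (es ! j + 1)"
        using DCC_in[of d 1, OF _ d_zero c] d_in by simp
      have b0: "DCC Dl (es ! j) (cs ! j) \<in> CCc Ac (es ! j - 1)"
        using DCC_in[of Dl "-1", OF _ D_zero c] D_in by simp
      have b: "ushift (DCC Dl (es ! j) (cs ! j)) \<in> CCc Ac (es ! j + 1)"
        using ushift_CCc[OF b0] by (simp add: add.commute)
      have i: "indom (CCc Ac) n (es[j := es ! j + 1]) (cs[j := DCC d (es ! j) (cs ! j)])"
        using True j a by (auto simp: indom_def nth_list_update)
      have "?F (es[j := es ! j + 1]) (cs[j := dCC d Dl (es ! j) (cs ! j)])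
          = ?F (es[j := es ! j + 1]) ((cs[j := DCC d (es ! j) (cs ! j)])[j := DCC d (es ! j) (cs ! j) + ushift (DCC Dl (es ! j) (cs ! j))])"
        by (simp add: dCC_split)
      also have "\<dots> = A j + ?F (es[j := es ! j + 1]) (cs[j := ushift (DCC Dl (es ! j) (cs ! j))])"
        using Phi_add_slot[OF ph i, of j] j a b True by (simp add: A_def indom_def)
      also have "?F (es[j := es ! j + 1]) (cs[j := ushift (DCC Dl (es ! j) (cs ! j))]) = ushift (B j)"
        using Phi_ushift_slot[OF ph True j b0] unfolding B_def by (simp add: algebra_simps)
      finally show ?thesis .
    qed
    have R: "ebracket (CCc Ac) (dCC d Dl) 1 n q ?F es cs
      = (DCC d ?E (?F es cs) + ushift (DCC Dl ?E (?F es cs)))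
        - sgnmul q (\<Sum>j<n. sgnmul (sum_list (take j es)) (A j + ushift (B j)))"
    proof -
      have R0: "(\<Sum>j<n. sgnmul (sum_list (take j es)) (?F (es[j := es ! j + 1]) (cs[j := dCC d Dl (es ! j) (cs ! j)])))
        = (\<Sum>j<n. sgnmul (sum_list (take j es)) (A j + ushift (B j)))"
        by (rule sum.cong) (auto simp: slot)
      show ?thesis using True by (simp add: ebracket_def R0 dCC_split[of "sum_list es + q"])
    qed
    have L1: "ebracket (CCc Ac) (DCC d) 1 n q ?F es cs
      = DCC d ?E (?F es cs) - sgnmul q (\<Sum>j<n. sgnmul (sum_list (take j es)) (A j))"
      using True by (simp add: ebracket_def A_def)
    have L2: "ebracket (CCc Ac) (DCC Dl) (-1) n q ?F es cs
      = DCC Dl ?E (?F es cs) - sgnmul q (\<Sum>j<n. sgnmul (sum_list (take j es)) (B j))"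
      using True by (simp add: ebracket_def B_def sgnmul_uminus)
    show ?thesis unfolding L R L1 L2
      by (simp add: ushift_diff ushift_sgnmul ushift_sum sgnmul_add sgnmul_diff sum.distrib)
  qed
qed


lemma perm_lt: "\<sigma> permutes {..<n} \<Longrightarrow> i < n \<Longrightarrow> \<sigma> i < n"
  using permutes_in_image[of \<sigma> "{..<n}" i] by simp
lemma perm_inv_lt: "\<sigma> permutes {..<n} \<Longrightarrow> i < n \<Longrightarrow> inv \<sigma> i < n"
  using perm_lt[OF permutes_inv] by blast

lemma koszul_parity:
  assumes "\<sigma> permutes {..<n}" "length es = n" "length ii = n"
  shows "even (koszul \<sigma> (sh es ii) n) = even (koszul \<sigma> es n)"
proof -
  let ?S = "{(i, j). i < j \<and> j < n \<and> \<sigma> j < \<sigma> i}"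
  have "koszul \<sigma> (sh es ii) n - koszul \<sigma> es n
      = (\<Sum>(i, j)\<in>?S. sh es ii ! \<sigma> i * sh es ii ! \<sigma> j - es ! \<sigma> i * es ! \<sigma> j)"
    unfolding koszul_def by (simp add: sum_subtractf split_beta)
  also have "2 dvd \<dots>"
  proof (rule dvd_sum, clarify)
    fix i j assume ij: "i < j" "j < n" "\<sigma> j < \<sigma> i"
    have "\<sigma> i < n" "\<sigma> j < n" using ij assms by (auto intro: perm_lt)
    hence "sh es ii ! \<sigma> i * sh es ii ! \<sigma> j - es ! \<sigma> i * es ! \<sigma> j
        = 2 * (2 * int (ii ! \<sigma> i) * int (ii ! \<sigma> j) - es ! \<sigma> i * int (ii ! \<sigma> j) - int (ii ! \<sigma> i) * es ! \<sigma> j)"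
      using assms by (simp add: nth_sh algebra_simps)
    thus "2 dvd (sh es ii ! \<sigma> i * sh es ii ! \<sigma> j - es ! \<sigma> i * es ! \<sigma> j)" by simp
  qed
  finally show ?thesis by (metis dvd_add_right_iff diff_add_cancel)
qed

lemma part7:
  assumes \<sigma>: "\<sigma> permutes {..<n}" and ph: "\<phi> \<in> CCE sc Ac n q"
  shows "Phi Ac n q (actCCE Ac n \<sigma> \<phi>) = actEnd (CCc Ac) n \<sigma> (Phi Ac n q \<phi>)"
proof (intro ext)
  fix es cs N
  let ?P = "\<lambda>xs. map (\<lambda>i. xs ! \<sigma> i) [0..<n]"
  show "Phi Ac n q (actCCE Ac n \<sigma> \<phi>) es cs N = actEnd (CCc Ac) n \<sigma> (Phi Ac n q \<phi>) es cs N"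
  proof (cases "indom (CCc Ac) n es cs")
    case False thus ?thesis by (simp add: Phi_out actEnd_def)
  next
    case True
    have L: "length es = n" "length cs = n" using True by (auto simp: indom_def)
    have iP: "indom (CCc Ac) n (?P es) (?P cs)"
      using True \<sigma> by (auto simp: indom_def perm_lt)
    have LHS: "Phi Ac n q (actCCE Ac n \<sigma> \<phi>) es cs N
        = (\<Sum>(r, ii)\<in>idx n N. sgnmul (koszul \<sigma> es n) (\<phi> r (?P (sh es ii)) (?P (ev cs ii))))"
      unfolding Phi_in[OF True]
    proof (rule sum.cong[OF refl], clarify)
      fix r ii assume "(r, ii) \<in> idx n N"
      hence l: "length ii = n" by (simp add: idx_iff)
      show "actCCE Ac n \<sigma> \<phi> r (sh es ii) (ev cs ii) = sgnmul (koszul \<sigma> es n) (\<phi> r (?P (sh es ii)) (?P (ev cs ii)))"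
        using indom_sh[OF True l] koszul_parity[OF \<sigma> L(1) l]
        by (simp add: actCCE_def actEnd_def cong: sgnmul_cong)
    qed
    have RHS: "actEnd (CCc Ac) n \<sigma> (Phi Ac n q \<phi>) es cs N
        = sgnmul (koszul \<sigma> es n) (\<Sum>(r, jj)\<in>idx n N. \<phi> r (sh (?P es) jj) (ev (?P cs) jj))"
      using True by (simp add: actEnd_def sgnmul_apply Phi_in[OF iP])
    have RI: "(\<Sum>(r, ii)\<in>idx n N. \<phi> r (?P (sh es ii)) (?P (ev cs ii)))
        = (\<Sum>(r, jj)\<in>idx n N. \<phi> r (sh (?P es) jj) (ev (?P cs) jj))"
    proof (rule sum.reindex_bij_witness[where j="\<lambda>(r, ii). (r, ?P ii)"
          and i="\<lambda>(r, jj). (r, map (\<lambda>i. jj ! inv \<sigma> i) [0..<n])"])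
      fix a assume a: "a \<in> idx n N"
      obtain r ii where ar: "a = (r, ii)" by (cases a)
      have l: "length ii = n" "r + sum_list ii = N" using a ar by (auto simp: idx_iff)
      show "(\<lambda>(r, jj). (r, map (\<lambda>i. jj ! inv \<sigma> i) [0..<n])) ((\<lambda>(r, ii). (r, ?P ii)) a) = a"
        using ar l \<sigma> by (auto intro!: nth_equalityI simp: perm_inv_lt permutes_inverses)
      have "sum_list (?P ii) = (\<Sum>i<n. ii ! \<sigma> i)" by (simp add: sum_list_sum_nth atLeast0LessThan)
      also have "\<dots> = (\<Sum>i<n. ii ! i)" using sum.permute[OF \<sigma>, of "\<lambda>i. ii ! i"] by (simp add: comp_def)
      also have "\<dots> = sum_list ii" using l by (simp add: sum_list_sum_nth atLeast0LessThan)
      finally show "(\<lambda>(r, ii). (r, ?P ii)) a \<in> idx n N" using ar l by (simp add: idx_iff)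
      have "sh (?P es) (?P ii) = ?P (sh es ii)" "ev (?P cs) (?P ii) = ?P (ev cs ii)"
        using L l \<sigma> by (auto intro!: nth_equalityI simp: nth_sh nth_ev perm_lt)
      thus "(\<lambda>(r, jj). \<phi> r (sh (?P es) jj) (ev (?P cs) jj)) ((\<lambda>(r, ii). (r, ?P ii)) a)
          = (\<lambda>(r, ii). \<phi> r (?P (sh es ii)) (?P (ev cs ii))) a" using ar by simp
    next
      fix b assume b: "b \<in> idx n N"
      obtain r jj where br: "b = (r, jj)" by (cases b)
      have l: "length jj = n" "r + sum_list jj = N" using b br by (auto simp: idx_iff)
      let ?Q = "map (\<lambda>i. jj ! inv \<sigma> i) [0..<n]"
      show "(\<lambda>(r, ii). (r, ?P ii)) ((\<lambda>(r, jj). (r, map (\<lambda>i. jj ! inv \<sigma> i) [0..<n])) b) = b"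
        using br l \<sigma> by (auto intro!: nth_equalityI simp: perm_lt permutes_inverses)
      have "sum_list ?Q = (\<Sum>i<n. jj ! inv \<sigma> i)" by (simp add: sum_list_sum_nth atLeast0LessThan)
      also have "\<dots> = (\<Sum>i<n. jj ! i)" using sum.permute[OF permutes_inv[OF \<sigma>], of "\<lambda>i. jj ! i"] by (simp add: comp_def)
      also have "\<dots> = sum_list jj" using l by (simp add: sum_list_sum_nth atLeast0LessThan)
      finally show "(\<lambda>(r, jj). (r, map (\<lambda>i. jj ! inv \<sigma> i) [0..<n])) b \<in> idx n N" using br l by (simp add: idx_iff)
    qed
    show ?thesis unfolding LHS RHS RI[symmetric] by (simp add: sgnmul_sum split_beta)
  qed
qed


lemma sh_app: "length xa = length ya \<Longrightarrow> sh (xa @ xb) (ya @ yb) = sh xa ya @ sh xb yb"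
  by (simp add: sh_def)
lemma ev_app: "length xa = length ya \<Longrightarrow> ev (xa @ xb) (ya @ yb) = ev xa ya @ ev xb yb"
  by (simp add: ev_def)
lemma drop_sh: "drop j (sh es ii) = sh (drop j es) (drop j ii)"
  by (simp add: sh_def drop_zip drop_map)
lemma take_sh': "take j (sh es ii) = sh (take j es) (take j ii)"
  by (simp add: sh_def take_zip take_map)
lemma drop_ev: "drop j (ev cs ii) = ev (drop j cs) (drop j ii)"
  by (simp add: ev_def drop_zip drop_map)
lemma take_ev: "take j (ev cs ii) = ev (take j cs) (take j ii)"
  by (simp add: ev_def take_zip take_map)
lemma sh_Cons: "sh (e # es) (i # ii) = (e - 2 * int i) # sh es ii" by (simp add: sh_def)
lemma ev_Cons: "ev (c # cs) (i # ii) = c i # ev cs ii" by (simp add: ev_def)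
lemma sh_Nil: "sh [] ii = []" by (simp add: sh_def)
lemma ev_Nil: "ev [] ii = []" by (simp add: ev_def)
lemma sh_single: "sh [e] [i] = [e - 2 * int i]" by (simp add: sh_def)
lemma ev_single: "ev [c] [i] = [c i]" by (simp add: ev_def)

lemma sum_list_split3: "sum_list (ll :: nat list) = sum_list (take j ll) + sum_list (take m (drop j ll)) + sum_list (drop (j + m) ll)"
proof -
  have "ll = take j ll @ take m (drop j ll) @ drop m (drop j ll)" by (simp only: append_take_drop_id)
  hence "sum_list ll = sum_list (take j ll @ take m (drop j ll) @ drop m (drop j ll))" by metis
  thus ?thesis by (simp add: add.commute)
qed


lemma part6:
  assumes j: "j < n" and ph: "\<phi> \<in> CCE sc Ac n q" and ps: "\<psi> \<in> CCE sc Ac m q'"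
  shows "Phi Ac (n + m - 1) (q + q') (compCCE Ac n m q' j \<phi> \<psi>)
       = compEnd (CCc Ac) n m q' j (Phi Ac n q \<phi>) (Phi Ac m q' \<psi>)"
proof (intro ext)
  fix es cs N
  define K where "K = n + m - 1"
  show "Phi Ac (n + m - 1) (q + q') (compCCE Ac n m q' j \<phi> \<psi>) es cs N
       = compEnd (CCc Ac) n m q' j (Phi Ac n q \<phi>) (Phi Ac m q' \<psi>) es cs N"
  proof (cases "indom (CCc Ac) K es cs")
    case False thus ?thesis by (simp add: Phi_out compEnd_def K_def)
  next
    case True
    have LK: "length es = K" "length cs = K" using True by (auto simp: indom_def)
    have jm: "j + m \<le> K" using j by (simp add: K_def)
    define esm where "esm = take m (drop j es)"
    define csm where "csm = take m (drop j cs)"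
    define X where "X = Phi Ac m q' \<psi> esm csm"
    define es1 where "es1 = take j es @ [sum_list esm + q'] @ drop (j + m) es"
    define cs1 where "cs1 = take j cs @ [X] @ drop (j + m) cs"
    have im: "indom (CCc Ac) m esm csm"
      using True jm by (auto simp: indom_def esm_def csm_def)
    have X_in: "X \<in> CCc Ac (sum_list esm + q')"
      using Phi_EndS[OF ps] im unfolding X_def EndS_def by blast
    have L1: "length es1 = n" "length cs1 = n" using LK jm j by (auto simp: es1_def cs1_def K_def)
    have es1j: "es1 ! j = sum_list esm + q'" "cs1 ! j = X" using LK jm by (auto simp: es1_def cs1_def nth_append)
    have i1: "indom (CCc Ac) n es1 cs1"
    proof -
      have "cs1 ! i \<in> CCc Ac (es1 ! i)" if "i < n" for i
      proof -
        consider "i < j" | "i = j" | "j < i" by linarith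
        thus ?thesis
        proof cases
          case 1 thus ?thesis using True LK jm by (auto simp: es1_def cs1_def nth_append indom_def)
        next
          case 2 thus ?thesis using es1j X_in by simp
        next
          case 3
          hence "es1 ! i = es ! (i + m - 1)" "cs1 ! i = cs ! (i + m - 1)"
            using LK jm by (auto simp: es1_def cs1_def nth_append add.commute)
          moreover have "i + m - 1 < K" using that 3 by (simp add: K_def)
          ultimately show ?thesis using True by (simp add: indom_def)
        qed
      qed
      thus ?thesis using L1 by (simp add: indom_def)
    qed
    define G where "G = (\<lambda>(s, ii) (t, kk). \<phi> s (sh es1 ii) ((ev cs1 ii)[j := \<psi> t (sh esm kk) (ev csm kk)]))"
    have R: "compEnd (CCc Ac) n m q' j (Phi Ac n q \<phi>) (Phi Ac m q' \<psi>) es cs N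
       = sgnmul (q' * sum_list (take j es)) (\<Sum>a\<in>(SIGMA a:idx n N. idx m (snd a ! j)). G (fst a) (snd a))"
    proof -
      have "compEnd (CCc Ac) n m q' j (Phi Ac n q \<phi>) (Phi Ac m q' \<psi>) es cs N
          = sgnmul (q' * sum_list (take j es)) (Phi Ac n q \<phi> es1 cs1 N)"
        using True unfolding K_def by (simp add: compEnd_def sgnmul_apply es1_def cs1_def X_def esm_def csm_def)
      also have "Phi Ac n q \<phi> es1 cs1 N = (\<Sum>a\<in>idx n N. \<Sum>b\<in>idx m (snd a ! j). G a b)"
        unfolding Phi_in[OF i1]
      proof (rule sum.cong[OF refl], clarify)
        fix s ii assume sii: "(s, ii) \<in> idx n N"
        have l: "length ii = n" using sii by (simp add: idx_iff)
        have e: "ev cs1 ii ! j = (\<Sum>b\<in>idx m (ii ! j). (\<lambda>(t, kk). \<psi> t (sh esm kk) (ev csm kk)) b)"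
          using l L1 j es1j by (simp add: nth_ev X_def Phi_in[OF im])
        have "\<phi> s (sh es1 ii) (ev cs1 ii) = \<phi> s (sh es1 ii) ((ev cs1 ii)[j := ev cs1 ii ! j])" by simp
        also have "\<dots> = (\<Sum>b\<in>idx m (ii ! j). \<phi> s (sh es1 ii) ((ev cs1 ii)[j := (\<lambda>(t, kk). \<psi> t (sh esm kk) (ev csm kk)) b]))"
          unfolding e
        proof (rule EndS_sum[OF CCE_EndS[OF ph] indom_sh[OF i1 l] j finite_idx])
          fix b assume b: "b \<in> idx m (ii ! j)"
          obtain t kk where bt: "b = (t, kk)" by (cases b)
          have "sh es1 ii ! j = sum_list esm + q' - 2 * int (ii ! j)" using l L1 j es1j by (simp add: nth_sh)
          thus "(\<lambda>(t, kk). \<psi> t (sh esm kk) (ev csm kk)) b \<in> Ac (sh es1 ii ! j)"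
            using Phi_term_in[OF ps im] b bt by simp
        qed
        finally show "\<phi> s (sh es1 ii) (ev cs1 ii) = (\<Sum>b\<in>idx m (snd (s, ii) ! j). G (s, ii) b)"
          by (simp add: G_def split_beta)
      qed
      also have "\<dots> = (\<Sum>a\<in>(SIGMA a:idx n N. idx m (snd a ! j)). G (fst a) (snd a))"
        by (subst sum.Sigma) (auto simp: finite_idx split_beta)
      finally show ?thesis .
    qed
    define H where "H = (\<lambda>(r, ll) s. \<phi> s (take j (sh es ll) @ [sum_list (take m (drop j (sh es ll))) + (q' - 2 * int (r - s))] @ drop (j + m) (sh es ll))
        (take j (ev cs ll) @ [\<psi> (r - s) (take m (drop j (sh es ll))) (take m (drop j (ev cs ll)))] @ drop (j + m) (ev cs ll)))"
    have L: "Phi Ac (n + m - 1) (q + q') (compCCE Ac n m q' j \<phi> \<psi>) es cs N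
       = sgnmul (q' * sum_list (take j es)) (\<Sum>a\<in>(SIGMA a:idx K N. {..fst a}). H (fst a) (snd a))"
    proof -
      have TK: "indom (CCc Ac) (n + m - 1) es cs" using True by (simp add: K_def)
      have "Phi Ac (n + m - 1) (q + q') (compCCE Ac n m q' j \<phi> \<psi>) es cs N
          = (\<Sum>a\<in>idx K N. \<Sum>s\<le>fst a. sgnmul (q' * sum_list (take j es)) (H a s))"
        unfolding K_def[symmetric] Phi_in[OF True]
      proof (rule sum.cong[OF refl], clarify)
        fix r ll assume rll: "(r, ll) \<in> idx K N"
        have l: "length ll = K" using rll by (simp add: idx_iff)
        have iK: "indom Ac (n + m - 1) (sh es ll) (ev cs ll)" using indom_sh[OF True l] by (simp add: K_def)
        show "compCCE Ac n m q' j \<phi> \<psi> r (sh es ll) (ev cs ll)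
            = (\<Sum>s\<le>fst (r, ll). sgnmul (q' * sum_list (take j es)) (H (r, ll) s))"
          unfolding compCCE_def sum_fun_apply
        proof (rule sum.cong, simp)
          fix s assume "s \<in> {..fst (r, ll)}"
          have par: "sgnmul ((q' - 2 * int (r - s)) * sum_list (take j (sh es ll))) x
              = sgnmul (q' * sum_list (take j es)) x" for x :: 'a
            by (rule sgnmul_cong) (use even_take_sh[of es ll j] l LK in simp)
          show "compEnd Ac n m (q' - 2 * int (r - s)) j (\<phi> s) (\<psi> (r - s)) (sh es ll) (ev cs ll)
              = sgnmul (q' * sum_list (take j es)) (H (r, ll) s)"
            using iK by (simp add: compEnd_def H_def par)
        qed
      qed
      also have "\<dots> = sgnmul (q' * sum_list (take j es)) (\<Sum>a\<in>idx K N. \<Sum>s\<le>fst a. H a s)"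
        by (simp add: sgnmul_sum)
      also have "(\<Sum>a\<in>idx K N. \<Sum>s\<le>fst a. H a s) = (\<Sum>a\<in>(SIGMA a:idx K N. {..fst a}). H (fst a) (snd a))"
        by (subst sum.Sigma) (auto simp: finite_idx split_beta)
      finally show ?thesis .
    qed
    have B: "(\<Sum>a\<in>(SIGMA a:idx K N. {..fst a}). H (fst a) (snd a))
       = (\<Sum>a\<in>(SIGMA a:idx n N. idx m (snd a ! j)). G (fst a) (snd a))"
    proof (rule sum.reindex_bij_witness[where
          j="\<lambda>((r, ll), s). ((s, take j ll @ [r - s + sum_list (take m (drop j ll))] @ drop (j + m) ll), (r - s, take m (drop j ll)))"
          and i="\<lambda>((s, ii), (t, kk)). ((s + t, take j ii @ kk @ drop (j + 1) ii), s)"])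
      fix a assume aS: "a \<in> (SIGMA a:idx K N. {..fst a})"
      obtain r ll s where ar: "a = ((r, ll), s)" by (metis prod.collapse)
      have l: "length ll = K" "r + sum_list ll = N" "s \<le> r" using aS ar by (auto simp: idx_iff)
      define t where "t = r - s"
      define kk where "kk = take m (drop j ll)"
      define ii where "ii = take j ll @ [t + sum_list kk] @ drop (j + m) ll"
      have ja: "(\<lambda>((r, ll), s). ((s, take j ll @ [r - s + sum_list (take m (drop j ll))] @ drop (j + m) ll), (r - s, take m (drop j ll)))) a
          = ((s, ii), (t, kk))" by (simp add: ar ii_def t_def kk_def)
      have lk: "length kk = m" using l jm by (simp add: kk_def)
      have lt: "length (take j ll) = j" using l jm by simp
      have li: "length ii = n" using l jm j by (simp add: ii_def K_def)
      have iij: "ii ! j = t + sum_list kk" using lt by (simp add: ii_def nth_append)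
      have sll: "sum_list ll = sum_list (take j ll) + sum_list kk + sum_list (drop (j + m) ll)"
        unfolding kk_def by (rule sum_list_split3)
      have sii: "s + sum_list ii = N" using l sll by (simp add: ii_def t_def)
      have dd: "take j ll @ take m (drop j ll) @ drop (m + j) ll = ll"
               "take j ll @ take m (drop j ll) @ drop (j + m) ll = ll"
        by (metis append_take_drop_id drop_drop, metis append_take_drop_id drop_drop add.commute)
      show "(\<lambda>((s, ii), (t, kk)). ((s + t, take j ii @ kk @ drop (j + 1) ii), s))
          ((\<lambda>((r, ll), s). ((s, take j ll @ [r - s + sum_list (take m (drop j ll))] @ drop (j + m) ll), (r - s, take m (drop j ll)))) a) = a"
        unfolding ja using lt l by (simp add: ar ii_def t_def kk_def dd)
      show "(\<lambda>((r, ll), s). ((s, take j ll @ [r - s + sum_list (take m (drop j ll))] @ drop (j + m) ll), (r - s, take m (drop j ll)))) a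
          \<in> (SIGMA a:idx n N. idx m (snd a ! j))"
        unfolding ja using li sii lk iij by (simp add: idx_iff)
      show "(\<lambda>a. G (fst a) (snd a)) ((\<lambda>((r, ll), s). ((s, take j ll @ [r - s + sum_list (take m (drop j ll))] @ drop (j + m) ll), (r - s, take m (drop j ll)))) a)
          = H (fst a) (snd a)"
      proof -
        have le: "length (take j es) = j" "length (take j cs) = j" using LK jm by auto
        have lem: "length esm = m" "length csm = m" using LK jm by (auto simp: esm_def csm_def)
        have tm: "take m (drop j (sh es ll)) = sh esm kk" "take m (drop j (ev cs ll)) = ev csm kk"
          by (simp_all add: take_sh' drop_sh take_ev drop_ev esm_def csm_def kk_def)
        have sh1: "sh es1 ii = take j (sh es ll) @ [sum_list (take m (drop j (sh es ll))) + (q' - 2 * int (r - s))] @ drop (j + m) (sh es ll)"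
        proof -
          have "sh es1 ii = sh (take j es) (take j ll) @ sh [sum_list esm + q'] [t + sum_list kk] @ sh (drop (j + m) es) (drop (j + m) ll)"
            unfolding es1_def ii_def using le lt by (simp add: sh_app sh_Cons sh_Nil)
          also have "sh [sum_list esm + q'] [t + sum_list kk] = [sum_list (take m (drop j (sh es ll))) + (q' - 2 * int (r - s))]"
            unfolding tm sum_sh[OF lem(1)[unfolded lk[symmetric]]] using lk lem by (simp add: sh_single t_def[symmetric])
          finally show ?thesis by (simp add: take_sh' drop_sh)
        qed
        have ev1: "(ev cs1 ii)[j := \<psi> t (sh esm kk) (ev csm kk)] = take j (ev cs ll) @ [\<psi> (r - s) (take m (drop j (sh es ll))) (take m (drop j (ev cs ll)))] @ drop (j + m) (ev cs ll)"
        proof -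
          have "ev cs1 ii = ev (take j cs) (take j ll) @ ev [X] [t + sum_list kk] @ ev (drop (j + m) cs) (drop (j + m) ll)"
            unfolding cs1_def ii_def using le lt by (simp add: ev_app ev_Cons ev_Nil)
          hence "(ev cs1 ii)[j := \<psi> t (sh esm kk) (ev csm kk)] = ev (take j cs) (take j ll) @ [\<psi> t (sh esm kk) (ev csm kk)] @ ev (drop (j + m) cs) (drop (j + m) ll)"
            using le lt by (simp add: ev_single list_update_append)
          thus ?thesis unfolding tm by (simp add: take_ev drop_ev t_def)
        qed
        show ?thesis unfolding ja using sh1 ev1 by (simp add: G_def H_def ar)
      qed
    next
      fix b assume bT: "b \<in> (SIGMA a:idx n N. idx m (snd a ! j))"
      obtain s ii t kk where br: "b = ((s, ii), (t, kk))" by (metis prod.collapse)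
      have l: "length ii = n" "s + sum_list ii = N" "length kk = m" "t + sum_list kk = ii ! j"
        using bT br by (auto simp: idx_iff)
      define ll where "ll = take j ii @ kk @ drop (j + 1) ii"
      have ib: "(\<lambda>((s, ii), (t, kk)). ((s + t, take j ii @ kk @ drop (j + 1) ii), s)) b = ((s + t, ll), s)"
        by (simp add: br ll_def)
      have lt: "length (take j ii) = j" using l j by simp
      have sii: "sum_list ii = sum_list (take j ii) + ii ! j + sum_list (drop (j + 1) ii)"
      proof -
        have "ii = take j ii @ ii ! j # drop (Suc j) ii" using l j by (simp add: id_take_nth_drop)
        hence "sum_list ii = sum_list (take j ii @ ii ! j # drop (Suc j) ii)" by metis
        thus ?thesis by simp
      qed
      show "(\<lambda>((r, ll), s). ((s, take j ll @ [r - s + sum_list (take m (drop j ll))] @ drop (j + m) ll), (r - s, take m (drop j ll))))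
          ((\<lambda>((s, ii), (t, kk)). ((s + t, take j ii @ kk @ drop (j + 1) ii), s)) b) = b"
      proof -
        have "take j ll = take j ii" "take m (drop j ll) = kk" "drop (j + m) ll = drop (j + 1) ii"
          using lt l by (simp_all add: ll_def)
        moreover have "take j ii @ [ii ! j] @ drop (j + 1) ii = ii" using l j id_take_nth_drop[of j ii] by auto
        ultimately show ?thesis unfolding ib using l by (simp add: br)
      qed
      show "(\<lambda>((s, ii), (t, kk)). ((s + t, take j ii @ kk @ drop (j + 1) ii), s)) b \<in> (SIGMA a:idx K N. {..fst a})"
        unfolding ib using l lt j sii by (simp add: idx_iff ll_def K_def)
    qed
    show ?thesis unfolding L R B ..
  qed
qed

end
theorem mainTheorem10:
  fixes sc :: "'k::field \<Rightarrow> 'a::ab_group_add \<Rightarrow> 'a"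
    and Ac :: "int \<Rightarrow> 'a set"
    and d Dl :: "int \<Rightarrow> 'a \<Rightarrow> 'a"
  assumes "mixed_cx sc Ac d Dl"
  shows
    \<comment> \<open>well defined: degree q goes to degree q\<close>
    "(\<forall>n q \<phi>. \<phi> \<in> CCE sc Ac n q \<longrightarrow> Phi Ac n q \<phi> \<in> EndS (scc sc) (CCc Ac) n q)
   \<comment> \<open>k-linear\<close>
   \<and> (\<forall>n q \<phi> \<psi> c. \<phi> \<in> CCE sc Ac n q \<and> \<psi> \<in> CCE sc Ac n q \<longrightarrow>
        Phi Ac n q (\<phi> + \<psi>) = Phi Ac n q \<phi> + Phi Ac n q \<psi> \<and>
        Phi Ac n q (\<lambda>r. fscale sc c (\<phi> r)) = fscale (scc sc) c (Phi Ac n q \<phi>))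
   \<comment> \<open>injective\<close>
   \<and> (\<forall>n q. inj_on (Phi Ac n q) (CCE sc Ac n q))
   \<comment> \<open>compatible with the differentials\<close>
   \<and> (\<forall>n q \<phi>. \<phi> \<in> CCE sc Ac n q \<longrightarrow>
        Phi Ac n (q + 1) (dCCE Ac d Dl n q \<phi>)
          = ebracket (CCc Ac) (dCC d Dl) 1 n q (Phi Ac n q \<phi>))
   \<comment> \<open>compatible with the operators \<Delta>\<close>
   \<and> (\<forall>n q \<phi>. \<phi> \<in> CCE sc Ac n q \<longrightarrow>
        Phi Ac n (q - 1) (DCCE Ac Dl n q \<phi>)
          = ebracket (CCc Ac) (DCC Dl) (-1) n q (Phi Ac n q \<phi>))
   \<comment> \<open>compatible with partial compositions\<close>
   \<and> (\<forall>n m q q' j \<phi> \<psi>. j < n \<and> \<phi> \<in> CCE sc Ac n q \<and> \<psi> \<in> CCE sc Ac m q' \<longrightarrow>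
        Phi Ac (n + m - 1) (q + q') (compCCE Ac n m q' j \<phi> \<psi>)
          = compEnd (CCc Ac) n m q' j (Phi Ac n q \<phi>) (Phi Ac m q' \<psi>))
   \<comment> \<open>compatible with the symmetric group actions\<close>
   \<and> (\<forall>n q \<sigma> \<phi>. \<sigma> permutes {..<n} \<and> \<phi> \<in> CCE sc Ac n q \<longrightarrow>
        Phi Ac n q (actCCE Ac n \<sigma> \<phi>) = actEnd (CCc Ac) n \<sigma> (Phi Ac n q \<phi>))
   \<comment> \<open>preserves the unit\<close>
   \<and> Phi Ac 1 0 (unitCCE Ac) = unitEnd (CCc Ac)"
proof -
  interpret mx sc Ac d Dl by (rule mx.intro) (rule assms)
  show ?thesis
  proof (intro conjI allI impI)
    show "Phi Ac 1 0 (unitCCE Ac) = unitEnd (CCc Ac)" by (rule Phi_unit)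
  next
    fix n m q q' j \<phi> \<psi>
    assume "j < n \<and> \<phi> \<in> CCE sc Ac n q \<and> \<psi> \<in> CCE sc Ac m q'"
    thus "Phi Ac (n + m - 1) (q + q') (compCCE Ac n m q' j \<phi> \<psi>)
          = compEnd (CCc Ac) n m q' j (Phi Ac n q \<phi>) (Phi Ac m q' \<psi>)"
      using part6 by blast
  qed (auto simp: Phi_EndS Phi_plus Phi_fscale Phi_inj part4 part5 part7)
qed

end
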